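(* Let $g\geqslant 1$ be odd. Under the lexicographical monomial ordering with $\alpha >\gamma$, the following set is a Gröbner basis for the ideal $J^+_g$: \[ \left\{\zeta^+_g, \;\; \gamma\zeta^+_{g-2}, \;\; \gamma^2\zeta^+_{g-4}, \;\; \ldots, \;\; \gamma^{(g-1)/2}\zeta^+_{1}, \;\; \gamma^{(g+1)/2}\right\}. \] Consequently, the initial ideal of $J_g^+$ is generated by the monomials $\gamma^i \alpha^{g-2i}$ with $0 \leqslant i \leqslant (g-1)/2$ together with $\gamma^{(g+1)/2}$, and thus a basis for $\mathbb{C}[\alpha,\gamma]/J_g^+$ is represented by the monomials $\gamma^i\alpha^j$ with $0\leqslant i\leqslant (g-1)/2$ and $0\leqslant j\leqslant g-2i-1$ (there are $(g+1)^2/4$ of them). The even index cases are as follows. If $g +1 \equiv 0 \pmod 4$ then $J_{g+1}^+ = J_{g}^+$. If $g + 1 \equiv 2 \pmod 4$, then $\deg J_{g+1}^+ - \deg J_{g}^+ = 1$ and $J_{g}^+ = \left( J_{g+1}^+, \; \gamma^{(g+1)/2}\right)$. Thus a vector space basis for $\mathbb{C}[\alpha,\gamma]/J_{g+1}^+$ when $g + 1 \equiv 2 \pmod 4$ is given by the monomials $\gamma^i\alpha^j$ with $0\leqslant i\leqslant (g-1)/2$ and $0\leqslant j\leqslant g-2i-1$, together with the monomial $\gamma^{(g+1)/2}$.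
   Context: Polynomials $\zeta_k^+\in\mathbb{C}[\alpha,\gamma]$ are defined by $\zeta_k^+=0$ for $k<0$, $\zeta_0^+=1$, and for $k\geqslant 0$: if $k$ is even, $\zeta^+_{k+1} = \alpha \zeta_k^+ + 16 k^2 \zeta_{k-1}^+ + 2k(k-1)\gamma\zeta_{k-2}^+$; if $k$ is odd, $\zeta^+_{k+1} = \alpha \zeta_k^+ + 2k(k-1)\gamma\zeta_{k-2}^+$. (These arise by setting $\beta=8$ in Muñoz's recursion $\zeta_{k+1} = \alpha\zeta_k + k^2(\beta + (-1)^k8)\zeta_{k-1} + 2k(k-1)\gamma\zeta_{k-2}$.) The ideal $J_g^+\subset\mathbb{C}[\alpha,\gamma]$ is $J_g^+=(\zeta_g^+,\zeta_{g+1}^+,\zeta_{g+2}^+)$. For an ideal $J$ with $\mathbb{C}[\alpha,\gamma]/J$ finite dimensional, $\deg J := \dim \mathbb{C}[\alpha,\gamma]/J$. *)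

theory Defs
  imports "HOL-Computational_Algebra.Polynomial"
begin

text \<open>We model the bivariate polynomial ring C[alpha,gamma] as complex poly poly:
  the outer variable is alpha, the coefficients are polynomials in gamma.\<close>

type_synonym bpoly = "complex poly poly"

definition alpha :: bpoly where "alpha = [:0, 1:]"
definition gamma :: bpoly where "gamma = [:[:0, 1:]:]"

definition cst :: "complex \<Rightarrow> bpoly" where "cst c = [:[:c:]:]"

definition mon :: "nat \<times> nat \<Rightarrow> bpoly" where
  "mon e = alpha ^ fst e * gamma ^ snd e"

text \<open>Leading exponent (alpha-exponent, gamma-exponent) w.r.t. lex order with alpha > gamma.\<close>
definition lexp :: "bpoly \<Rightarrow> nat \<times> nat" where
  "lexp p = (degree p, degree (lead_coeff p))"

definition gen_ideal :: "bpoly set \<Rightarrow> bpoly set" where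
  "gen_ideal S = {p. \<exists>F c. finite F \<and> F \<subseteq> S \<and> p = (\<Sum>f\<in>F. c f * f)}"

definition initial_ideal :: "bpoly set \<Rightarrow> bpoly set" where
  "initial_ideal I = gen_ideal {mon (lexp p) | p. p \<in> I \<and> p \<noteq> 0}"

definition is_groebner_basis :: "bpoly set \<Rightarrow> bpoly set \<Rightarrow> bool" where
  "is_groebner_basis G I \<longleftrightarrow> G \<subseteq> I \<and>
     initial_ideal I = gen_ideal {mon (lexp p) | p. p \<in> G \<and> p \<noteq> 0}"

definition spans_mod :: "bpoly set \<Rightarrow> bpoly set \<Rightarrow> bool" where
  "spans_mod J B \<longleftrightarrow> (\<forall>p. \<exists>c. p - (\<Sum>b\<in>B. cst (c b) * b) \<in> J)"

definition basis_mod :: "bpoly set \<Rightarrow> bpoly set \<Rightarrow> bool" where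
  "basis_mod J B \<longleftrightarrow> finite B \<and> spans_mod J B \<and>
     (\<forall>c. (\<Sum>b\<in>B. cst (c b) * b) \<in> J \<longrightarrow> (\<forall>b\<in>B. c b = 0))"

text \<open>deg J = dim of C[alpha,gamma]/J (as the minimal size of a finite spanning set).\<close>
definition qdeg :: "bpoly set \<Rightarrow> nat" where
  "qdeg J = (LEAST n. \<exists>B. finite B \<and> card B = n \<and> spans_mod J B)"

text \<open>zeta^+_k (Munoz recursion with beta = 8).\<close>
fun zeta :: "nat \<Rightarrow> bpoly" where
  "zeta 0 = 1"
| "zeta (Suc 0) = alpha"
| "zeta (Suc (Suc 0)) = alpha * zeta (Suc 0)"
| "zeta (Suc (Suc (Suc k))) =
     alpha * zeta (Suc (Suc k))
     + (if even (Suc (Suc k)) then of_nat (16 * (Suc (Suc k))^2) * zeta (Suc k) else 0)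
     + of_nat (2 * (Suc (Suc k)) * (Suc k)) * gamma * zeta k"

definition Jp :: "nat \<Rightarrow> bpoly set" where
  "Jp g = gen_ideal {zeta g, zeta (g + 1), zeta (g + 2)}"

end

theory Submission
  imports Defs
begin


definition is_ideal :: "bpoly set \<Rightarrow> bool" where
  "is_ideal I \<longleftrightarrow> 0 \<in> I \<and> (\<forall>x\<in>I. \<forall>y\<in>I. x + y \<in> I) \<and> (\<forall>c. \<forall>x\<in>I. c * x \<in> I)"

lemma gen_ideal_mem: "s \<in> S \<Longrightarrow> s \<in> gen_ideal S"
  unfolding gen_ideal_def by (rule CollectI, rule exI[of _ "{s}"], rule exI[of _ "\<lambda>_. 1"]) simp

lemma gen_ideal_0: "0 \<in> gen_ideal S"
  unfolding gen_ideal_def by (rule CollectI, rule exI[of _ "{}"]) simp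

lemma gen_idealE:
  assumes "x \<in> gen_ideal S"
  obtains F c where "finite F" "F \<subseteq> S" "x = (\<Sum>f\<in>F. c f * f)"
  using assms unfolding gen_ideal_def mem_Collect_eq by (elim exE conjE) (rule that)

lemma gen_idealI:
  "finite F \<Longrightarrow> F \<subseteq> S \<Longrightarrow> x = (\<Sum>f\<in>F. c f * f) \<Longrightarrow> x \<in> gen_ideal S"
  unfolding gen_ideal_def by blast

lemma sum_extend:
  fixes c :: "bpoly \<Rightarrow> bpoly"
  assumes "finite T" "F \<subseteq> T"
  shows "(\<Sum>f\<in>F. c f * f) = (\<Sum>f\<in>T. (if f \<in> F then c f else 0) * f)"
proof -
  have "(\<Sum>f\<in>T. (if f \<in> F then c f else 0) * f) = (\<Sum>f\<in>F. (if f \<in> F then c f else 0) * f)"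
    by (rule sum.mono_neutral_right[OF assms]) simp
  also have "\<dots> = (\<Sum>f\<in>F. c f * f)" by (rule sum.cong) simp_all
  finally show ?thesis by simp
qed

lemma gen_ideal_add:
  assumes "x \<in> gen_ideal S" "y \<in> gen_ideal S" shows "x + y \<in> gen_ideal S"
proof -
  obtain F c where F: "finite F" "F \<subseteq> S" "x = (\<Sum>f\<in>F. c f * f)" using assms(1) by (rule gen_idealE)
  obtain G d where G: "finite G" "G \<subseteq> S" "y = (\<Sum>f\<in>G. d f * f)" using assms(2) by (rule gen_idealE)
  have fu: "finite (F \<union> G)" using F(1) G(1) by simp
  have "x + y = (\<Sum>f\<in>F \<union> G. (if f \<in> F then c f else 0) * f) + (\<Sum>f\<in>F \<union> G. (if f \<in> G then d f else 0) * f)"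
    unfolding F(3) G(3) using sum_extend[OF fu, of F c] sum_extend[OF fu, of G d] by simp
  also have "\<dots> = (\<Sum>f\<in>F \<union> G. ((if f \<in> F then c f else 0) + (if f \<in> G then d f else 0)) * f)"
    by (simp only: sum.distrib[symmetric] distrib_right)
  finally show ?thesis using fu F(2) G(2) by (intro gen_idealI[of "F \<union> G"]) auto
qed

lemma gen_ideal_mult: "x \<in> gen_ideal S \<Longrightarrow> c * x \<in> gen_ideal S"
proof -
  assume "x \<in> gen_ideal S"
  then obtain F d where F: "finite F" "F \<subseteq> S" "x = (\<Sum>f\<in>F. d f * f)" by (rule gen_idealE)
  have "c * x = (\<Sum>f\<in>F. (c * d f) * f)" using F by (simp add: sum_distrib_left mult.assoc)
  then show ?thesis using F by (intro gen_idealI) auto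
qed

lemma is_ideal_gen_ideal: "is_ideal (gen_ideal S)"
  unfolding is_ideal_def by (auto intro: gen_ideal_0 gen_ideal_add gen_ideal_mult)

lemma is_idealD:
  assumes "is_ideal I"
  shows "0 \<in> I" "x \<in> I \<Longrightarrow> y \<in> I \<Longrightarrow> x + y \<in> I" "x \<in> I \<Longrightarrow> c * x \<in> I"
  using assms unfolding is_ideal_def by auto

lemma ideal_uminus: "is_ideal I \<Longrightarrow> x \<in> I \<Longrightarrow> - x \<in> I"
  using is_idealD(3)[of I x "-1"] by simp

lemma ideal_diff: "is_ideal I \<Longrightarrow> x \<in> I \<Longrightarrow> y \<in> I \<Longrightarrow> x - y \<in> I"
  using is_idealD(2)[of I x "-y"] ideal_uminus[of I y] by simp

lemma ideal_mult_right: "is_ideal I \<Longrightarrow> x \<in> I \<Longrightarrow> x * c \<in> I"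
  using is_idealD(3)[of I x c] by (simp add: mult.commute)

lemma ideal_sum: "is_ideal I \<Longrightarrow> (\<And>a. a \<in> A \<Longrightarrow> f a \<in> I) \<Longrightarrow> sum f A \<in> I"
proof (induction A rule: infinite_finite_induct)
  case (infinite A) then show ?case using is_idealD(1) by simp
next
  case empty then show ?case using is_idealD(1) by simp
next
  case (insert x F) then show ?case using is_idealD(2) by simp
qed

lemma gen_ideal_least:
  assumes "is_ideal I" "S \<subseteq> I" shows "gen_ideal S \<subseteq> I"
proof
  fix x assume "x \<in> gen_ideal S"
  then obtain F d where F: "finite F" "F \<subseteq> S" "x = (\<Sum>f\<in>F. d f * f)" by (rule gen_idealE)
  show "x \<in> I" unfolding F(3) using F assms by (intro ideal_sum) (auto intro: is_idealD(3))
qed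

lemma gen_ideal_mono: "S \<subseteq> T \<Longrightarrow> gen_ideal S \<subseteq> gen_ideal T"
  by (intro gen_ideal_least is_ideal_gen_ideal) (auto intro: gen_ideal_mem)

lemmas gi = is_ideal_gen_ideal


lemma hom_sum_gen:
  assumes "\<And>x y. f (x + y) = f x + f y" "f 0 = 0"
  shows "f (sum g A) = (\<Sum>a\<in>A. f (g a))"
  by (induction A rule: infinite_finite_induct) (simp_all add: assms)

lemma map_poly_mult_hom:
  fixes f :: "'a::comm_semiring_1 \<Rightarrow> 'b::comm_semiring_1"
  assumes add: "\<And>x y. f (x + y) = f x + f y" and mult: "\<And>x y. f (x * y) = f x * f y" and z: "f 0 = 0"
  shows "map_poly f (p * q) = map_poly f p * map_poly f q"
proof (rule poly_eqI)
  fix n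
  show "coeff (map_poly f (p * q)) n = coeff (map_poly f p * map_poly f q) n"
    by (simp add: coeff_map_poly z coeff_mult hom_sum_gen[of f, OF add z] mult)
qed

lemma map_poly_add_hom:
  assumes add: "\<And>x y. f (x + y) = f x + f y" and z: "f 0 = 0"
  shows "map_poly f (p + q) = map_poly f p + map_poly f q"
  by (rule poly_eqI) (simp add: coeff_map_poly z add)

lemma const_mult_poly: "[:a:] * p = smult a p"
  by simp

lemma gamma_mult: "gamma * p = smult [:0,1:] p"
  by (simp add: gamma_def)

lemma cst_mult: "cst c * p = smult [:c:] p"
  by (simp add: cst_def)

lemma alpha_mult: "alpha * p = pCons 0 p"
  by (simp add: alpha_def)

definition lift :: "complex poly \<Rightarrow> bpoly" where "lift e = map_poly (\<lambda>x. [:x:]) e"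
definition ev0 :: "bpoly \<Rightarrow> complex poly" where "ev0 p = map_poly (\<lambda>c. poly c 0) p"
definition tl0 :: "bpoly \<Rightarrow> bpoly" where "tl0 p = map_poly (\<lambda>c. synthetic_div c 0) p"

lemma coeff_lift: "coeff (lift e) n = [:coeff e n:]"
  by (simp add: lift_def coeff_map_poly)

lemma coeff_ev0: "coeff (ev0 p) n = poly (coeff p n) 0"
  by (simp add: ev0_def coeff_map_poly)

lemma coeff_tl0: "coeff (tl0 p) n = synthetic_div (coeff p n) 0"
  by (simp add: tl0_def coeff_map_poly)

lemma decomp0: "p = lift (ev0 p) + gamma * tl0 p"
proof (rule poly_eqI)
  fix n
  have "[:0,1:] * synthetic_div (coeff p n) 0 + [:poly (coeff p n) 0:] = coeff p n"
    using synthetic_div_correct'[of 0 "coeff p n"] by simp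
  then show "coeff p n = coeff (lift (ev0 p) + gamma * tl0 p) n"
    by (simp add: coeff_lift coeff_ev0 coeff_tl0 gamma_mult mult.commute add.commute)
qed

lemma ev0_add: "ev0 (p + q) = ev0 p + ev0 q"
  unfolding ev0_def by (rule map_poly_add_hom) simp_all

lemma ev0_mult: "ev0 (p * q) = ev0 p * ev0 q"
  unfolding ev0_def by (rule map_poly_mult_hom) simp_all

lemma ev0_uminus: "ev0 (- p) = - ev0 p"
  by (rule poly_eqI) (simp add: coeff_ev0)

lemma ev0_diff: "ev0 (p - q) = ev0 p - ev0 q"
  by (rule poly_eqI) (simp add: coeff_ev0)

lemma ev0_0 [simp]: "ev0 0 = 0" by (simp add: ev0_def)

lemma ev0_sum: "ev0 (sum f A) = (\<Sum>a\<in>A. ev0 (f a))"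
  by (rule hom_sum_gen) (simp_all add: ev0_add)

lemma lift_add: "lift (a + b) = lift a + lift b"
  unfolding lift_def by (rule map_poly_add_hom) simp_all

lemma lift_mult: "lift (a * b) = lift a * lift b"
  unfolding lift_def by (rule map_poly_mult_hom) simp_all

lemma ev0_lift [simp]: "ev0 (lift e) = e"
  by (rule poly_eqI) (simp add: coeff_ev0 coeff_lift)

lemma ev0_gamma [simp]: "ev0 gamma = 0"
  by (rule poly_eqI) (simp add: coeff_ev0 gamma_def coeff_pCons split: nat.splits)

lemma ev0_alpha [simp]: "ev0 alpha = [:0,1:]"
  by (rule poly_eqI) (simp add: coeff_ev0 alpha_def coeff_pCons split: nat.splits)

lemma ev0_cst [simp]: "ev0 (cst c) = [:c:]"
  by (rule poly_eqI) (simp add: coeff_ev0 cst_def coeff_pCons split: nat.splits)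

lemma ev0_one [simp]: "ev0 1 = 1"
  unfolding ev0_def by (rule map_poly_1') simp

lemma ev0_of_int [simp]: "ev0 (of_int k) = of_int k"
proof -
  have "(of_int k :: bpoly) = cst (of_int k)" by (simp add: cst_def of_int_poly)
  then show ?thesis by (simp add: of_int_poly)
qed

lemma ev0_of_nat [simp]: "ev0 (of_nat k) = of_nat k"
  using ev0_of_int[of "int k"] by simp

lemma ev0_gamma_mult [simp]: "ev0 (gamma * p) = 0"
  by (simp add: ev0_mult)

lemma ev0_eq0_gamma: "ev0 p = 0 \<Longrightarrow> p = gamma * tl0 p"
  using decomp0[of p] by (simp add: lift_def)

lemma gamma_ne0 [simp]: "gamma \<noteq> 0" by (simp add: gamma_def)
lemma alpha_ne0 [simp]: "alpha \<noteq> 0" by (simp add: alpha_def)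

lemma gamma_cancel: "gamma * p = gamma * q \<Longrightarrow> p = q"
  by simp

lemma degree_gamma_mult [simp]: "degree (gamma * p) = degree p"
  by (simp add: gamma_mult)

lemma lead_coeff_gamma_mult [simp]: "lead_coeff (gamma * p) = [:0,1:] * lead_coeff p"
  by (simp add: gamma_mult lead_coeff_smult)

lemma gamma_pow_mult: "gamma ^ k * p = smult ([:0,1:] ^ k) p"
  by (induction k) (simp_all add: gamma_mult mult.assoc)

definition zi :: "int \<Rightarrow> bpoly" where "zi k = (if k < 0 then 0 else zeta (nat k))"

lemma zi_neg [simp]: "k < 0 \<Longrightarrow> zi k = 0" by (simp add: zi_def)
lemma zi_nat [simp]: "zi (int m) = zeta m" by (simp add: zi_def)
lemma zi_0 [simp]: "zi 0 = 1" by (simp add: zi_def)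
lemma zi_1 [simp]: "zi 1 = alpha" using zi_nat[of 1] by simp

lemma zi_rec:
  assumes "k \<ge> 0"
  shows "zi (k + 1) = alpha * zi k + (if even k then of_int (16 * k^2) * zi (k - 1) else 0)
           + of_int (2 * k * (k - 1)) * gamma * zi (k - 2)"
proof -
  have "k = 0 \<or> k = 1 \<or> (\<exists>m. k = int m + 2)"
  proof (cases "k \<ge> 2")
    case True
    then have "k - 2 = int (nat (k - 2))" by simp
    then show ?thesis by (metis diff_add_cancel)
  next
    case False then show ?thesis using assms by auto
  qed
  then consider "k = 0" | "k = 1" | m where "k = int m + 2" by blast
  then show ?thesis
  proof cases
    case 1 then show ?thesis by simp
  next
    case 2
    have "zi 2 = alpha * alpha" using zi_nat[of 2]
      by (simp add: numeral_2_eq_2)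
    then show ?thesis using 2 by simp
  next
    case 3
    have n1: "nat (int m + 2 + 1) = Suc (Suc (Suc m))" "nat (int m + 2) = Suc (Suc m)"
      "nat (int m + 2 - 1) = Suc m" "nat (int m + 2 - 2) = m" by simp_all
    have z: "zi (int m + 2 + 1) = zeta (Suc (Suc (Suc m)))" "zi (int m + 2) = zeta (Suc (Suc m))"
      "zi (int m + 2 - 1) = zeta (Suc m)" "zi (int m + 2 - 2) = zeta m"
      unfolding zi_def n1 by simp_all
    have h2: "(of_int (16 * (int m + 2)^2) :: bpoly) = of_nat (16 * (Suc (Suc m))^2)"
      by (simp add: algebra_simps)
    have h3: "(of_int (2 * (int m + 2) * (int m + 2 - 1)) :: bpoly) = of_nat (2 * Suc (Suc m) * Suc m)"
      by (simp add: algebra_simps)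
    have h4: "even (int m + 2) = even (Suc (Suc m))" by simp
    show ?thesis unfolding 3 by (simp only: z h2 h3 h4 zeta.simps(4))
  qed
qed



lemma of_int_bpoly: "(of_int k :: bpoly) = cst (of_int k)"
  by (simp add: cst_def of_int_poly)

lemma of_nat_bpoly: "(of_nat k :: bpoly) = cst (of_nat k)"
  by (simp add: cst_def of_nat_poly)

lemma cst_mult_cst: "cst a * cst b = cst (a * b)"
  by (simp add: cst_def)

lemma cst_one [simp]: "cst 1 = 1"
  by (simp add: cst_def one_pCons)

lemma cst_add: "cst (a + b) = cst a + cst b"
  by (simp add: cst_def)

lemma cst_zero [simp]: "cst 0 = 0"
  by (simp add: cst_def)

lemma cst_neg_one [simp]: "cst (- 1) = - 1"
proof -
  have "cst (- 1) + 1 = 0" using cst_add[of "- 1" 1] by simp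
  then show ?thesis by (simp add: eq_neg_iff_add_eq_0)
qed

lemma ideal_cancel_cst:
  assumes "is_ideal I" "c \<noteq> 0" "cst c * x \<in> I" shows "x \<in> I"
proof -
  have "cst (1/c) * (cst c * x) \<in> I" using assms is_idealD(3) by blast
  also have "cst (1/c) * (cst c * x) = x" using assms(2)
    by (simp add: mult.assoc[symmetric] cst_mult_cst)
  finally show ?thesis .
qed

lemma ideal_cancel_int:
  assumes "is_ideal I" "k \<noteq> 0" "of_int k * x \<in> I" shows "x \<in> I"
  using ideal_cancel_cst[of I "of_int k" x] assms by (simp add: of_int_bpoly)

lemma deg_lc_add:
  assumes "degree q < degree p"
  shows "degree (p + q) = degree p \<and> lead_coeff (p + q) = lead_coeff p"
  using assms by (simp add: degree_add_eq_left coeff_eq_0)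

lemma degree_of_nat_mult_le: "degree (of_nat c * p :: bpoly) \<le> degree p"
  using degree_mult_le[of "of_nat c :: bpoly" p] by simp

lemma degree_of_nat_gamma_mult_le: "degree (of_nat c * gamma * p :: bpoly) \<le> degree p"
proof -
  have "degree (of_nat c * gamma :: bpoly) = 0"
    using degree_mult_le[of "of_nat c :: bpoly" gamma] by (simp add: gamma_def)
  then show ?thesis using degree_mult_le[of "of_nat c * gamma :: bpoly" p] by simp
qed

lemma zeta_monic: "degree (zeta m) = m \<and> lead_coeff (zeta m) = 1"
proof (induction m rule: less_induct)
  case (less m)
  consider "m = 0" | "m = 1" | "m = 2" | k where "m = Suc (Suc (Suc k))"
    by (metis One_nat_def Suc_1 not0_implies_Suc)
  then show ?case
  proof cases
    case 1 then show ?thesis by simp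
  next
    case 2 then show ?thesis by (simp add: alpha_def)
  next
    case 3 then show ?thesis by (simp add: numeral_2_eq_2 alpha_mult alpha_def)
  next
    case 4
    let ?Aa = "alpha * zeta (Suc (Suc k))"
    let ?Xa = "(if even (Suc (Suc k)) then of_nat (16 * (Suc (Suc k))^2) * zeta (Suc k) else 0) :: bpoly"
    let ?Ya = "of_nat (2 * (Suc (Suc k)) * (Suc k)) * gamma * zeta k :: bpoly"
    have lt: "Suc (Suc k) < m" "Suc k < m" "k < m" using 4 by simp_all
    have IH2: "degree (zeta (Suc (Suc k))) = Suc (Suc k) \<and> lead_coeff (zeta (Suc (Suc k))) = 1"
      by (rule less.IH[OF lt(1)])
    have d2: "degree (zeta (Suc (Suc k))) = Suc (Suc k)" and l2: "lead_coeff (zeta (Suc (Suc k))) = 1"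
      using IH2 by blast+
    have d1: "degree (zeta (Suc k)) = Suc k" using less.IH[OF lt(2)] by blast
    have d0: "degree (zeta k) = k" using less.IH[OF lt(3)] by blast
    have z2: "zeta (Suc (Suc k)) \<noteq> 0" using l2 by auto
    have Ae: "?Aa = pCons 0 (zeta (Suc (Suc k)))" by (simp add: alpha_mult)
    have A: "degree ?Aa = Suc (Suc (Suc k))" "lead_coeff ?Aa = 1"
      unfolding Ae using d2 z2 l2 lead_coeff_pCons(1)[OF z2, of 0] by simp_all
    have "degree ?Xa \<le> Suc k"
    proof (cases "even (Suc (Suc k))")
      case True
      have "degree ?Xa = degree (of_nat (16 * (Suc (Suc k))^2) * zeta (Suc k) :: bpoly)" using True by (simp only: if_True)
      also have "\<dots> \<le> degree (zeta (Suc k))" by (rule degree_of_nat_mult_le)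
      finally show ?thesis using d1 by simp
    next
      case False then show ?thesis by simp
    qed
    moreover have "degree ?Ya \<le> k" using degree_of_nat_gamma_mult_le[of "2 * (Suc (Suc k)) * (Suc k)" "zeta k"] d0 by simp
    ultimately have "degree (?Xa + ?Ya) < degree ?Aa"
      using A degree_add_le_max[of ?Xa ?Ya] by linarith
    then have DL: "degree (?Aa + (?Xa + ?Ya)) = degree ?Aa \<and> lead_coeff (?Aa + (?Xa + ?Ya)) = lead_coeff ?Aa"
      by (rule deg_lc_add)
    have e: "zeta m = ?Aa + (?Xa + ?Ya)" unfolding 4 by (simp only: zeta.simps(4) add.assoc)
    show ?thesis using DL A 4 e by metis
  qed
qed

lemma zi_monic:
  assumes "k \<ge> 0" shows "degree (zi k) = nat k" "lead_coeff (zi k) = 1"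
proof -
  have e: "zi k = zeta (nat k)" using assms by (simp add: zi_def)
  show "degree (zi k) = nat k" unfolding e using zeta_monic[of "nat k"] by blast
  show "lead_coeff (zi k) = 1" unfolding e using zeta_monic[of "nat k"] by blast
qed

lemma zi_odd_monic: "degree (zi (2 * int n + 1)) = 2 * n + 1" "lead_coeff (zi (2 * int n + 1)) = 1"
proof -
  have "nat (2 * int n + 1) = 2 * n + 1" by simp
  then show "degree (zi (2 * int n + 1)) = 2 * n + 1" using zi_monic(1)[of "2 * int n + 1"] by simp
  show "lead_coeff (zi (2 * int n + 1)) = 1" using zi_monic(2)[of "2 * int n + 1"] by simp
qed

lemma ev0_monic:
  assumes "lead_coeff p = 1"
  shows "degree (ev0 p) = degree p" "ev0 p \<noteq> 0"
proof -
  have c: "coeff (ev0 p) (degree p) = 1" using assms by (simp add: coeff_ev0)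
  have "degree (ev0 p) \<le> degree p" unfolding ev0_def by (rule map_poly_degree_leq)
  moreover have "degree p \<le> degree (ev0 p)" using c by (intro le_degree) simp
  ultimately show "degree (ev0 p) = degree p" by simp
  show "ev0 p \<noteq> 0" using c by auto
qed

lemma zr_even: "zi (2 * int n + 1) = alpha * zi (2 * int n) + of_int (16 * (2 * int n)^2) * zi (2 * int n - 1)
    + of_int (2 * (2 * int n) * (2 * int n - 1)) * gamma * zi (2 * int n - 2)"
  using zi_rec[of "2 * int n"] by simp

lemma zr_odd: "zi (2 * int n + 2) = alpha * zi (2 * int n + 1)
    + of_int (2 * (2 * int n + 1) * (2 * int n)) * gamma * zi (2 * int n - 1)"
proof -
  have e: "2 * int n + 1 + 1 = 2 * int n + 2" "2 * int n + 1 - 2 = 2 * int n - 1" "2 * int n + 1 - 1 = 2 * int n"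
    by simp_all
  show ?thesis using zi_rec[of "2 * int n + 1", unfolded e] by simp
qed

lemma zr_even2: "zi (2 * int n + 3) = alpha * zi (2 * int n + 2) + of_int (16 * (2 * int n + 2)^2) * zi (2 * int n + 1)
    + of_int (2 * (2 * int n + 2) * (2 * int n + 1)) * gamma * zi (2 * int n)"
proof -
  have e: "2 * int n + 2 + 1 = 2 * int n + 3" "2 * int n + 2 - 2 = 2 * int n" "2 * int n + 2 - 1 = 2 * int n + 1"
    by simp_all
  have ev: "even (2 * int n + 2)" by simp
  show ?thesis using zi_rec[of "2 * int n + 2", unfolded e] ev by simp
qed

section \<open>The ideals J n = J_(2n-1)\<close>

definition JJ :: "nat \<Rightarrow> bpoly set" where
  "JJ n = gen_ideal {zi (2 * int n - 1), zi (2 * int n), zi (2 * int n + 1)}"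

lemma JJ_ideal: "is_ideal (JJ n)" unfolding JJ_def by (rule gi)

lemma JJ_gens: "zi (2 * int n - 1) \<in> JJ n" "zi (2 * int n) \<in> JJ n" "zi (2 * int n + 1) \<in> JJ n"
  unfolding JJ_def by (auto intro: gen_ideal_mem)

lemma JJ_Suc_def: "JJ (Suc n) = gen_ideal {zi (2 * int n + 1), zi (2 * int n + 2), zi (2 * int n + 3)}"
proof -
  have "2 * int (Suc n) - 1 = 2 * int n + 1" "2 * int (Suc n) = 2 * int n + 2" "2 * int (Suc n) + 1 = 2 * int n + 3"
    by simp_all
  then show ?thesis unfolding JJ_def by (simp only:)
qed

lemma JJ_Suc_gens: "zi (2 * int n + 1) \<in> JJ (Suc n)" "zi (2 * int n + 2) \<in> JJ (Suc n)" "zi (2 * int n + 3) \<in> JJ (Suc n)"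
  unfolding JJ_Suc_def by (auto intro: gen_ideal_mem)

lemma JJ_add: "x \<in> JJ n \<Longrightarrow> y \<in> JJ n \<Longrightarrow> x + y \<in> JJ n"
  using JJ_ideal is_idealD(2) by blast
lemma JJ_mult: "x \<in> JJ n \<Longrightarrow> c * x \<in> JJ n"
  using JJ_ideal is_idealD(3) by blast
lemma JJ_mult_right: "x \<in> JJ n \<Longrightarrow> x * c \<in> JJ n"
  using JJ_ideal ideal_mult_right by blast
lemma JJ_diff: "x \<in> JJ n \<Longrightarrow> y \<in> JJ n \<Longrightarrow> x - y \<in> JJ n"
  using JJ_ideal ideal_diff by blast
lemma JJ_0: "0 \<in> JJ n"
  using JJ_ideal is_idealD(1) by blast

lemma zi_2n2_JJ: "zi (2 * int n + 2) \<in> JJ n"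
  unfolding zr_odd using JJ_gens by (intro JJ_add JJ_mult) auto

lemma zi_2n3_JJ: "zi (2 * int n + 3) \<in> JJ n"
  unfolding zr_even2 using JJ_gens zi_2n2_JJ by (intro JJ_add JJ_mult) auto

lemma JJ_Suc_sub: "JJ (Suc n) \<subseteq> JJ n"
  unfolding JJ_Suc_def using JJ_gens zi_2n2_JJ zi_2n3_JJ
  by (intro gen_ideal_least JJ_ideal) auto

lemma JJ_0_UNIV: "JJ 0 = UNIV"
proof -
  have "zi 0 \<in> JJ 0" using JJ_gens(2)[of 0] by simp
  then have "x * 1 \<in> JJ 0" for x using JJ_mult by (metis zi_0 mult.commute)
  then show ?thesis by auto
qed

lemma gamma_JJ: "x \<in> JJ n \<Longrightarrow> gamma * x \<in> JJ (Suc n)"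
proof -
  let ?D = "{x. gamma * x \<in> JJ (Suc n)}"
  have D: "is_ideal ?D" unfolding is_ideal_def
    using JJ_0 JJ_add JJ_mult by (auto simp: distrib_left mult.left_commute)
  have g1: "gamma * zi (2 * int n + 1) \<in> JJ (Suc n)" using JJ_Suc_gens(1) JJ_mult by blast
  have g2: "gamma * zi (2 * int n) \<in> JJ (Suc n)"
  proof -
    have "of_int (2 * (2 * int n + 2) * (2 * int n + 1)) * (gamma * zi (2 * int n))
        = zi (2 * int n + 3) - alpha * zi (2 * int n + 2) - of_int (16 * (2 * int n + 2)^2) * zi (2 * int n + 1)"
      unfolding zr_even2 by (simp add: algebra_simps)
    also have "\<dots> \<in> JJ (Suc n)" using JJ_Suc_gens by (intro JJ_diff JJ_mult) auto
    finally show ?thesis by (rule ideal_cancel_int[OF JJ_ideal, rotated]) simp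
  qed
  have g3: "gamma * zi (2 * int n - 1) \<in> JJ (Suc n)"
  proof (cases "n = 0")
    case True then show ?thesis using JJ_0 by simp
  next
    case False
    have "of_int (2 * (2 * int n + 1) * (2 * int n)) * (gamma * zi (2 * int n - 1))
        = zi (2 * int n + 2) - alpha * zi (2 * int n + 1)"
      unfolding zr_odd by (simp add: algebra_simps)
    also have "\<dots> \<in> JJ (Suc n)" using JJ_Suc_gens by (intro JJ_diff JJ_mult) auto
    finally show ?thesis by (rule ideal_cancel_int[OF JJ_ideal, rotated]) (use False in simp)
  qed
  have "JJ n \<subseteq> ?D" unfolding JJ_def[of n] using g1 g2 g3 by (intro gen_ideal_least D) auto
  then show "x \<in> JJ n \<Longrightarrow> gamma * x \<in> JJ (Suc n)" by auto
qed

lemma JJ_dec: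
  assumes "x \<in> JJ (Suc n)"
  shows "\<exists>a r. r \<in> JJ n \<and> x = a * zi (2 * int n + 1) + gamma * r"
proof -
  define z where "z = zi (2 * int n + 1)"
  define z2 where "z2 = zi (2 * int n + 2)"
  define z3 where "z3 = zi (2 * int n + 3)"
  define u where "u = zi (2 * int n - 1)"
  define v where "v = zi (2 * int n)"
  define c1 where "c1 = (of_int (2 * (2 * int n + 1) * (2 * int n)) :: bpoly)"
  define c2 where "c2 = (of_int (16 * (2 * int n + 2)^2) :: bpoly)"
  define c3 where "c3 = (of_int (2 * (2 * int n + 2) * (2 * int n + 1)) :: bpoly)"
  have e2: "z2 = alpha * z + c1 * gamma * u" unfolding z2_def z_def c1_def u_def by (rule zr_odd)
  have e3: "z3 = alpha * z2 + c2 * z + c3 * gamma * v" unfolding z3_def z2_def z_def c2_def c3_def v_def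
    by (rule zr_even2)
  have uJ: "u \<in> JJ n" and vJ: "v \<in> JJ n" unfolding u_def v_def using JJ_gens by auto
  let ?D = "{x. \<exists>a r. r \<in> JJ n \<and> x = a * z + gamma * r}"
  have D: "is_ideal ?D" unfolding is_ideal_def
  proof (intro conjI ballI allI)
    show "0 \<in> ?D" using JJ_0 by (auto intro!: exI[of _ 0])
  next
    fix x y assume "x \<in> ?D" "y \<in> ?D"
    then obtain a r b s where h: "r \<in> JJ n" "x = a * z + gamma * r" "s \<in> JJ n" "y = b * z + gamma * s" by blast
    have "x + y = (a + b) * z + gamma * (r + s)" unfolding h(2,4) by (simp add: algebra_simps)
    then show "x + y \<in> ?D" using JJ_add[OF h(1,3)] by blast
  next
    fix c x assume "x \<in> ?D"
    then obtain a r where h: "r \<in> JJ n" "x = a * z + gamma * r" by blast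
    have "c * x = (c * a) * z + gamma * (c * r)" unfolding h(2) by (simp add: algebra_simps)
    then show "c * x \<in> ?D" using JJ_mult[OF h(1)] by blast
  qed
  have g1: "z \<in> ?D"
  proof -
    have "z = 1 * z + gamma * 0" by simp
    then show ?thesis using JJ_0 by blast
  qed
  have g2: "z2 \<in> ?D"
  proof -
    have "z2 = alpha * z + gamma * (c1 * u)" unfolding e2 by (simp add: algebra_simps)
    then show ?thesis using JJ_mult[OF uJ] by blast
  qed
  have g3: "z3 \<in> ?D"
  proof -
    have "z3 = (alpha * alpha + c2) * z + gamma * (alpha * c1 * u + c3 * v)"
      unfolding e3 e2 by (simp add: algebra_simps)
    then show ?thesis using JJ_add[OF JJ_mult[OF uJ] JJ_mult[OF vJ]] by blast
  qed
  have "JJ (Suc n) \<subseteq> ?D" unfolding JJ_Suc_def z_def[symmetric] z2_def[symmetric] z3_def[symmetric]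
    using g1 g2 g3 by (intro gen_ideal_least D) auto
  then show ?thesis using assms unfolding z_def by auto
qed

lemma zo_ne0: "ev0 (zi (2 * int n + 1)) \<noteq> 0" "degree (ev0 (zi (2 * int n + 1))) = 2 * n + 1"
proof -
  note m = zi_odd_monic[of n]
  show "ev0 (zi (2 * int n + 1)) \<noteq> 0" using ev0_monic(2)[OF m(2)] .
  show "degree (ev0 (zi (2 * int n + 1))) = 2 * n + 1" using ev0_monic(1)[OF m(2)] m(1) by simp
qed

lemma JJ_colon:
  assumes "gamma * q \<in> JJ (Suc n)" shows "q \<in> JJ n"
proof -
  obtain a r where r: "r \<in> JJ n" "gamma * q = a * zi (2 * int n + 1) + gamma * r"
    using JJ_dec[OF assms] by blast
  have "0 = ev0 a * ev0 (zi (2 * int n + 1))"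
    using arg_cong[OF r(2), of ev0] by (simp add: ev0_add ev0_mult)
  then have "ev0 a = 0" using zo_ne0(1)[of n] by simp
  then have a: "a = gamma * tl0 a" by (rule ev0_eq0_gamma)
  have "gamma * q = gamma * (tl0 a * zi (2 * int n + 1) + r)"
    using r(2) a by (metis distrib_left mult.assoc)
  then have "q = tl0 a * zi (2 * int n + 1) + r" by simp
  then show ?thesis using r(1) JJ_gens(3) by (simp add: JJ_add JJ_mult)
qed

lemma gamma_pow_JJ: "x \<in> JJ n \<Longrightarrow> gamma ^ k * x \<in> JJ (n + k)"
  by (induction k) (simp_all add: gamma_JJ mult.assoc)

lemma gamma_pow_in_JJ: "gamma ^ n \<in> JJ n"
  using gamma_pow_JJ[of 1 0 n] by (simp add: JJ_0_UNIV)

lemma lt_JJ: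
  assumes "p \<in> JJ n" "p \<noteq> 0"
  shows "n \<le> degree (lead_coeff p) \<or> (\<exists>k<n. 2 * n \<le> degree p + 2 * k + 1 \<and> k \<le> degree (lead_coeff p))"
  using assms
proof (induction n arbitrary: p)
  case 0 then show ?case by simp
next
  case (Suc n)
  show ?case
  proof (cases "2 * n + 1 \<le> degree p")
    case True then show ?thesis by (intro disjI2 exI[of _ 0]) auto
  next
    case False
    obtain a r where r: "r \<in> JJ n" "p = a * zi (2 * int n + 1) + gamma * r"
      using JJ_dec[OF Suc.prems(1)] by blast
    have ep: "ev0 p = ev0 a * ev0 (zi (2 * int n + 1))"
      using r(2) by (simp add: ev0_add ev0_mult)
    have dp: "degree (ev0 p) \<le> degree p" unfolding ev0_def by (rule map_poly_degree_leq)
    have "ev0 a = 0"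
    proof (rule ccontr)
      assume "ev0 a \<noteq> 0"
      then have "degree (ev0 p) = degree (ev0 a) + (2 * n + 1)"
        using ep zo_ne0[of n] by (simp add: degree_mult_eq)
      then show False using dp False by simp
    qed
    then have a: "a = gamma * tl0 a" by (rule ev0_eq0_gamma)
    have "ev0 p = 0" using ep \<open>ev0 a = 0\<close> by simp
    then have pg: "p = gamma * tl0 p" by (rule ev0_eq0_gamma)
    have "gamma * tl0 p = gamma * (tl0 a * zi (2 * int n + 1) + r)"
      using r(2) a pg by (metis distrib_left mult.assoc)
    then have tp: "tl0 p = tl0 a * zi (2 * int n + 1) + r" by simp
    have tJ: "tl0 p \<in> JJ n" unfolding tp using r(1) JJ_gens(3) by (simp add: JJ_add JJ_mult)
    have t0: "tl0 p \<noteq> 0" using Suc.prems(2) pg by auto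
    have dd: "degree p = degree (tl0 p)" using pg by (metis degree_gamma_mult)
    have lc: "lead_coeff p = [:0,1:] * lead_coeff (tl0 p)" using pg by (metis lead_coeff_gamma_mult)
    have de: "degree (lead_coeff p) = Suc (degree (lead_coeff (tl0 p)))"
      unfolding lc using t0 by (subst degree_mult_eq) auto
    from Suc.IH[OF tJ t0] show ?thesis
    proof
      assume "n \<le> degree (lead_coeff (tl0 p))" then show ?thesis using de by simp
    next
      assume "\<exists>k<n. 2 * n \<le> degree (tl0 p) + 2 * k + 1 \<and> k \<le> degree (lead_coeff (tl0 p))"
      then obtain k where "k < n" "2 * n \<le> degree (tl0 p) + 2 * k + 1" "k \<le> degree (lead_coeff (tl0 p))" by blast
      then show ?thesis using de dd by (intro disjI2 exI[of _ "Suc k"]) auto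
    qed
  qed
qed

definition supp :: "nat \<Rightarrow> bpoly \<Rightarrow> bool" where
  "supp n v \<longleftrightarrow> (\<forall>j i. coeff (coeff v j) i \<noteq> 0 \<longrightarrow> i < n \<and> j + 2 * i + 1 < 2 * n)"


lemma span_JJ: "\<exists>v. supp n v \<and> p - v \<in> JJ n"
proof (induction n arbitrary: p)
  case 0 then show ?case by (intro exI[of _ 0]) (simp add: supp_def JJ_0_UNIV)
next
  case (Suc n)
  let ?z = "zi (2 * int n + 1)"
  note m = zi_odd_monic[of n]
  have z0: "?z \<noteq> 0" using m(2) by auto
  obtain q r where qr: "pseudo_divmod p ?z = (q, r)" by (metis surj_pair)
  have pe: "p = ?z * q + r" using pseudo_divmod(1)[OF z0 qr] m(2) by simp
  have rd: "r = 0 \<or> degree r < 2 * n + 1" using pseudo_divmod(2)[OF z0 qr] m(1) by simp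
  obtain v' where v': "supp n v'" "tl0 r - v' \<in> JJ n" using Suc.IH by blast
  define v where "v = lift (ev0 r) + gamma * v'"
  have "p - v = ?z * q + gamma * (tl0 r - v')"
    using decomp0[of r] pe by (simp add: v_def algebra_simps)
  also have "\<dots> \<in> JJ (Suc n)"
    using JJ_Suc_gens(1) gamma_JJ[OF v'(2)] by (simp add: JJ_add JJ_mult_right)
  finally have in1: "p - v \<in> JJ (Suc n)" .
  have cv: "coeff (coeff v j) i = (if i = 0 then coeff (ev0 r) j else coeff (coeff v' j) (i - 1))" for i j
    by (cases i) (simp_all add: v_def coeff_lift gamma_mult)
  have der: "degree (ev0 r) \<le> degree r" unfolding ev0_def by (rule map_poly_degree_leq)
  have "supp (Suc n) v" unfolding supp_def
  proof (intro allI impI)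
    fix j i assume nz: "coeff (coeff v j) i \<noteq> 0"
    show "i < Suc n \<and> j + 2 * i + 1 < 2 * Suc n"
    proof (cases i)
      case 0
      then have "coeff (ev0 r) j \<noteq> 0" using nz cv by simp
      then have "j \<le> degree (ev0 r)" by (rule le_degree)
      moreover have "r \<noteq> 0" using \<open>coeff (ev0 r) j \<noteq> 0\<close> by auto
      ultimately show ?thesis using 0 der rd by auto
    next
      case (Suc i')
      then have "coeff (coeff v' j) i' \<noteq> 0" using nz cv by simp
      then show ?thesis using v'(1) Suc unfolding supp_def by auto
    qed
  qed
  then show ?case using in1 by blast
qed

lemma indep_JJ:
  assumes "supp n v" "v \<in> JJ n" shows "v = 0"
proof (rule ccontr)
  assume v0: "v \<noteq> 0"
  let ?d = "degree v" and ?e = "degree (lead_coeff v)"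
  have "lead_coeff v \<noteq> 0" using v0 by simp
  then have "coeff (coeff v ?d) ?e \<noteq> 0" by simp
  then have s: "?e < n" "?d + 2 * ?e + 1 < 2 * n" using assms(1) unfolding supp_def by blast+
  from lt_JJ[OF assms(2) v0] show False
  proof
    assume "n \<le> ?e" then show False using s by simp
  next
    assume "\<exists>k<n. 2 * n \<le> ?d + 2 * k + 1 \<and> k \<le> ?e"
    then show False using s by auto
  qed
qed



section \<open>The derivation D = d/d alpha - 16 d/d gamma\<close>

definition dg :: "bpoly \<Rightarrow> bpoly" where "dg p = map_poly pderiv p"
definition DD :: "bpoly \<Rightarrow> bpoly" where "DD p = pderiv p - 16 * dg p"

lemma coeff_dg: "coeff (dg p) n = pderiv (coeff p n)"
  by (simp add: dg_def coeff_map_poly)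

lemma dg_add: "dg (p + q) = dg p + dg q"
  by (rule poly_eqI) (simp add: coeff_dg pderiv_add)

lemma pderiv_sum_gen: "pderiv (sum f A) = (\<Sum>a\<in>A. pderiv (f a))"
  by (rule hom_sum_gen) (simp_all add: pderiv_add)

lemma dg_mult: "dg (p * q) = dg p * q + p * dg q"
proof (rule poly_eqI)
  fix n
  have "coeff (dg (p * q)) n = (\<Sum>i\<le>n. pderiv (coeff p i * coeff q (n - i)))"
    by (simp add: coeff_dg coeff_mult pderiv_sum_gen)
  also have "\<dots> = (\<Sum>i\<le>n. pderiv (coeff p i) * coeff q (n - i)) + (\<Sum>i\<le>n. coeff p i * pderiv (coeff q (n - i)))"
    by (simp add: pderiv_mult sum.distrib[symmetric] algebra_simps)
  also have "\<dots> = coeff (dg p * q + p * dg q) n"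
    by (simp add: coeff_mult coeff_dg)
  finally show "coeff (dg (p * q)) n = coeff (dg p * q + p * dg q) n" .
qed

lemma DD_add: "DD (p + q) = DD p + DD q"
  by (simp add: DD_def dg_add pderiv_add algebra_simps)

lemma DD_mult: "DD (p * q) = DD p * q + p * DD q"
  by (simp add: DD_def dg_mult pderiv_mult algebra_simps)

lemma dg_uminus: "dg (- p) = - dg p"
  by (rule poly_eqI) (simp add: coeff_dg pderiv_minus)

lemma DD_uminus: "DD (- p) = - DD p"
  by (simp add: DD_def dg_uminus pderiv_minus)

lemma DD_0 [simp]: "DD 0 = 0"
  by (simp add: DD_def dg_def)

lemma DD_diff: "DD (p - q) = DD p - DD q"
  using DD_add[of p "- q"] DD_uminus[of q] by simp

lemma dg_const: "dg [:c:] = [:pderiv c:]"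
  by (rule poly_eqI) (simp add: coeff_dg coeff_pCons split: nat.splits)

lemma DD_alpha [simp]: "DD alpha = 1"
proof -
  have "dg alpha = 0" by (rule poly_eqI) (simp add: coeff_dg alpha_def coeff_pCons split: nat.splits)
  then show ?thesis by (simp add: DD_def alpha_def pderiv_pCons)
qed

lemma DD_gamma [simp]: "DD gamma = -16"
proof -
  have "dg gamma = 1" unfolding gamma_def dg_const by (simp add: pderiv_pCons one_pCons)
  moreover have "pderiv gamma = 0" by (simp add: gamma_def pderiv_pCons)
  ultimately show ?thesis by (simp add: DD_def)
qed

lemma DD_cst [simp]: "DD (cst c) = 0"
  by (simp add: DD_def cst_def dg_const pderiv_pCons)

lemma DD_of_int [simp]: "DD (of_int k) = 0"
  by (simp add: of_int_bpoly)

lemma DD_one [simp]: "DD 1 = 0"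
  using DD_of_int[of 1] by simp

lemma DD_of_nat [simp]: "DD (of_nat k) = 0"
  using DD_of_int[of "int k"] by simp

lemma DD_numeral [simp]: "DD (numeral k) = 0"
  using DD_of_nat[of "numeral k"] by simp

lemma DD_pow_0 [simp]: "(DD ^^ k) 0 = 0"
  by (induction k) simp_all

lemma DD_comb2: "DD (alpha * a + of_int c * gamma * b) = a + alpha * DD a + of_int c * (gamma * DD b - 16 * b)"
  by (simp add: DD_add DD_mult algebra_simps)

lemma DD_comb3: "DD (alpha * a + of_int c1 * b + of_int c2 * gamma * d)
    = a + alpha * DD a + of_int c1 * DD b + of_int c2 * (gamma * DD d - 16 * d)"
  by (simp add: DD_add DD_mult algebra_simps)

lemma DD_alpha_mult: "DD (alpha * p) = p + alpha * DD p"
  by (simp add: DD_mult)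

lemma DD_gamma_mult: "DD (gamma * p) = gamma * DD p - 16 * p"
  by (simp add: DD_mult algebra_simps)

lemma DD_of_int_mult: "DD (of_int k * p) = of_int k * DD p"
  by (simp add: DD_mult)

lemma DD_cst_mult: "DD (cst c * p) = cst c * DD p"
  by (simp add: DD_mult)

lemma DD_sum: "DD (sum f A) = (\<Sum>a\<in>A. DD (f a))"
  by (rule hom_sum_gen) (simp_all add: DD_add)

lemma zi_rec_even: "k \<ge> 0 \<Longrightarrow> even k \<Longrightarrow> zi (k + 1) = alpha * zi k + of_int (16 * k^2) * zi (k - 1)
    + of_int (2 * k * (k - 1)) * gamma * zi (k - 2)"
  using zi_rec[of k] by simp

lemma zi_rec_odd: "k \<ge> 0 \<Longrightarrow> odd k \<Longrightarrow> zi (k + 1) = alpha * zi k + of_int (2 * k * (k - 1)) * gamma * zi (k - 2)"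
  using zi_rec[of k] by simp

lemma alg_even:
  fixes A B C D k :: bpoly
  assumes "A = alpha * B + 16 * (k - 2)^2 * C + 2 * (k - 2) * (k - 3) * gamma * D"
  shows "A + alpha * ((k - 1) * B) + 2 * (k - 1) * (k - 2) * (gamma * ((k - 3) * D) - 16 * C)
         = k * (A - 16 * (k - 2) * (k - 1) * C)"
  using assms by algebra

lemma alg_odd:
  fixes A B C D E k :: bpoly
  assumes "A = alpha * B + 2 * (k - 2) * (k - 3) * gamma * D"
    and "(k - 3) * C = (k - 3) * (alpha * D + 2 * (k - 4) * (k - 5) * gamma * E)"
  shows "A + alpha * ((k - 1) * (B - 16 * (k - 3) * (k - 2) * D)) + 16 * (k - 1)^2 * ((k - 2) * C)
         + 2 * (k - 1) * (k - 2) * (gamma * ((k - 3) * (D - 16 * (k - 5) * (k - 4) * E)) - 16 * C) = k * A"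
  using assms by algebra

definition dzeta :: "int \<Rightarrow> bpoly" where
  "dzeta k = (if odd k then of_int k * zi (k - 1)
              else of_int k * (zi (k - 1) - of_int (16 * (k - 2) * (k - 1)) * zi (k - 3)))"

lemma DD_zi: "DD (zi k) = dzeta k"
proof (cases "k < 0")
  case True then show ?thesis by (simp add: dzeta_def)
next
  case False
  then obtain m where km: "k = int m" by (metis nat_0_le not_less)
  have "DD (zi (int m)) = dzeta (int m)"
  proof (induction m rule: less_induct)
    case (less m)
    consider "m = 0" | "m = 1" | "m \<ge> 2" by linarith
    then show ?case
    proof cases
      case 1 then show ?thesis by (simp add: dzeta_def)
    next
      case 2 then show ?thesis by (simp add: dzeta_def)
    next
      case 3
      define K where "K = int m"
      have K2: "K \<ge> 2" using 3 by (simp add: K_def)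
      have IH: "\<And>j. 0 \<le> j \<Longrightarrow> j < K \<Longrightarrow> DD (zi j) = dzeta j"
      proof -
        fix j :: int assume "0 \<le> j" "j < K"
        then have "nat j < m" by (simp add: K_def)
        then show "DD (zi j) = dzeta j" using less.IH[of "nat j"] \<open>0 \<le> j\<close> by simp
      qed
      have neg: "\<And>j. j < 0 \<Longrightarrow> DD (zi j) = dzeta j" by (simp add: dzeta_def)
      have IH': "\<And>j. j < K \<Longrightarrow> DD (zi j) = dzeta j" using IH neg by (metis not_le)
      define k where "k = (of_int K :: bpoly)"
      define A where "A = zi (K - 1)"
      define B where "B = zi (K - 2)"
      define C where "C = zi (K - 3)"
      define D where "D = zi (K - 4)"
      define E where "E = zi (K - 6)"
      have "DD (zi K) = dzeta K"
      proof (cases "even K")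
        case True
        then have o1: "odd (K - 1)" by simp
        have r: "zi K = alpha * A + of_int (2 * (K - 1) * (K - 2)) * gamma * C"
          using zi_rec_odd[of "K - 1"] K2 o1 unfolding A_def C_def by (simp add: algebra_simps)
        have r2: "A = alpha * B + 16 * (k - 2)^2 * C + 2 * (k - 2) * (k - 3) * gamma * D"
          using zi_rec_even[of "K - 2"] K2 True unfolding A_def B_def C_def D_def k_def by simp
        have d1: "DD A = (k - 1) * B"
          using IH'[of "K - 1"] o1 unfolding A_def B_def k_def by (simp add: dzeta_def)
        have d3: "DD C = (k - 3) * D"
          using IH'[of "K - 3"] o1 unfolding C_def D_def k_def by (simp add: dzeta_def)
        have "DD (zi K) = A + alpha * DD A + of_int (2 * (K - 1) * (K - 2)) * (gamma * DD C - 16 * C)"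
          unfolding r by (rule DD_comb2)
        also have "\<dots> = A + alpha * ((k - 1) * B) + 2 * (k - 1) * (k - 2) * (gamma * ((k - 3) * D) - 16 * C)"
          unfolding d1 d3 k_def by simp
        also have "\<dots> = k * (A - 16 * (k - 2) * (k - 1) * C)" by (rule alg_even[OF r2])
        also have "\<dots> = dzeta K" using True unfolding k_def A_def C_def by (simp add: dzeta_def)
        finally show "DD (zi K) = dzeta K" .
      next
        case False
        then have e1: "even (K - 1)" by simp
        have r: "zi K = alpha * A + of_int (16 * (K - 1)^2) * B + of_int (2 * (K - 1) * (K - 2)) * gamma * C"
          using zi_rec_even[of "K - 1"] K2 e1 unfolding A_def B_def C_def by (simp add: algebra_simps)
        have r2: "A = alpha * B + 2 * (k - 2) * (k - 3) * gamma * D"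
          using zi_rec_odd[of "K - 2"] K2 False unfolding A_def B_def D_def k_def by simp
        have r3: "(k - 3) * C = (k - 3) * (alpha * D + 2 * (k - 4) * (k - 5) * gamma * E)"
        proof (cases "K = 3")
          case True then show ?thesis unfolding k_def by simp
        next
          case False
          then have "K - 4 \<ge> 0" using K2 \<open>odd K\<close> by presburger
          then have "C = alpha * D + 2 * (k - 4) * (k - 5) * gamma * E"
            using zi_rec_odd[of "K - 4"] \<open>odd K\<close> unfolding C_def D_def E_def k_def by simp
          then show ?thesis by simp
        qed
        have d1: "DD A = (k - 1) * (B - 16 * (k - 3) * (k - 2) * D)"
          using IH'[of "K - 1"] e1 unfolding A_def B_def D_def k_def by (simp add: dzeta_def)
        have d2: "DD B = (k - 2) * C"
          using IH'[of "K - 2"] False unfolding B_def C_def k_def by (simp add: dzeta_def)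
        have d3: "DD C = (k - 3) * (D - 16 * (k - 5) * (k - 4) * E)"
          using IH'[of "K - 3"] e1 unfolding C_def D_def E_def k_def by (simp add: dzeta_def)
        have "DD (zi K) = A + alpha * DD A + of_int (16 * (K - 1)^2) * DD B
              + of_int (2 * (K - 1) * (K - 2)) * (gamma * DD C - 16 * C)"
          unfolding r by (rule DD_comb3)
        also have "\<dots> = A + alpha * ((k - 1) * (B - 16 * (k - 3) * (k - 2) * D)) + 16 * (k - 1)^2 * ((k - 2) * C)
         + 2 * (k - 1) * (k - 2) * (gamma * ((k - 3) * (D - 16 * (k - 5) * (k - 4) * E)) - 16 * C)"
          unfolding d1 d2 d3 k_def by simp
        also have "\<dots> = k * A" by (rule alg_odd[OF r2 r3])
        also have "\<dots> = dzeta K" using False unfolding k_def A_def by (simp add: dzeta_def)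
        finally show "DD (zi K) = dzeta K" .
      qed
      then show ?thesis by (simp add: K_def)
    qed
  qed
  then show ?thesis using km by simp
qed



lemma DD_JJ: "x \<in> JJ (Suc n) \<Longrightarrow> DD x \<in> JJ n"
proof -
  let ?S = "{x. x \<in> JJ n \<and> DD x \<in> JJ n}"
  have S: "is_ideal ?S" unfolding is_ideal_def
    using JJ_0 JJ_add JJ_mult by (auto simp: DD_add DD_mult)
  have g1: "DD (zi (2 * int n + 1)) \<in> JJ n"
    unfolding DD_zi dzeta_def using JJ_gens(2) by (simp add: JJ_mult)
  have g2: "DD (zi (2 * int n + 2)) \<in> JJ n"
  proof -
    have e: "2 * int n + 2 - 1 = 2 * int n + 1" "2 * int n + 2 - 3 = 2 * int n - 1" by simp_all
    show ?thesis unfolding DD_zi dzeta_def e using JJ_gens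
      by (simp add: JJ_mult JJ_diff)
  qed
  have g3: "DD (zi (2 * int n + 3)) \<in> JJ n"
  proof -
    have e: "2 * int n + 3 - 1 = 2 * int n + 2" by simp
    show ?thesis unfolding DD_zi dzeta_def e using zi_2n2_JJ by (simp add: JJ_mult)
  qed
  have "JJ (Suc n) \<subseteq> ?S" unfolding JJ_Suc_def
    using g1 g2 g3 JJ_gens zi_2n2_JJ zi_2n3_JJ by (intro gen_ideal_least S) auto
  then show "x \<in> JJ (Suc n) \<Longrightarrow> DD x \<in> JJ n" by auto
qed

lemma DD_pow_JJ: "x \<in> JJ (n + k) \<Longrightarrow> (DD ^^ k) x \<in> JJ n"
proof (induction k arbitrary: x)
  case 0 then show ?case by simp
next
  case (Suc k)
  have "DD x \<in> JJ (n + k)" using DD_JJ[of x "n + k"] Suc.prems by simp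
  then have "(DD ^^ k) (DD x) \<in> JJ n" by (rule Suc.IH)
  then show ?case by (simp add: funpow_Suc_right del: funpow.simps)
qed

lemma DD_pow_add: "(DD ^^ k) (p + q) = (DD ^^ k) p + (DD ^^ k) q"
  by (induction k) (simp_all add: DD_add)

lemma DD_pow_cst: "(DD ^^ k) (cst c * p) = cst c * (DD ^^ k) p"
  by (induction k) (simp_all add: DD_cst_mult)

lemma DD_pow_gamma: "(DD ^^ Suc k) (gamma * p) = gamma * (DD ^^ Suc k) p - of_int (16 * int (Suc k)) * (DD ^^ k) p"
proof (induction k)
  case 0 then show ?case by (simp add: DD_gamma_mult)
next
  case (Suc k)
  have "(DD ^^ Suc (Suc k)) (gamma * p) = DD ((DD ^^ Suc k) (gamma * p))" by simp
  also have "\<dots> = DD (gamma * (DD ^^ Suc k) p) - of_int (16 * int (Suc k)) * DD ((DD ^^ k) p)"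
    unfolding Suc by (simp add: DD_diff DD_mult DD_add)
  also have "\<dots> = gamma * (DD ^^ Suc (Suc k)) p - of_int (16 * int (Suc (Suc k))) * (DD ^^ Suc k) p"
    by (simp add: DD_gamma_mult algebra_simps)
  finally show ?case .
qed

lemma DD_pow_alpha: "(DD ^^ Suc k) (alpha * p) = alpha * (DD ^^ Suc k) p + of_int (int (Suc k)) * (DD ^^ k) p"
proof (induction k)
  case 0 then show ?case by (simp add: DD_alpha_mult)
next
  case (Suc k)
  have "(DD ^^ Suc (Suc k)) (alpha * p) = DD ((DD ^^ Suc k) (alpha * p))" by simp
  also have "\<dots> = DD (alpha * (DD ^^ Suc k) p) + of_int (int (Suc k)) * DD ((DD ^^ k) p)"
    unfolding Suc by (simp add: DD_add DD_mult)
  also have "\<dots> = alpha * (DD ^^ Suc (Suc k)) p + of_int (int (Suc (Suc k))) * (DD ^^ Suc k) p"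
    by (simp add: DD_alpha_mult algebra_simps)
  finally show ?case .
qed

section \<open>Values of zeta at gamma = 0\<close>

definition zo :: "nat \<Rightarrow> complex poly" where "zo j = ev0 (zi (2 * int j - 1))"

definition QQ :: "nat \<Rightarrow> complex poly" where "QQ j = [:64 * (of_nat j)^2, 0, 1:]"

lemma zo_Suc: "zo (Suc j) = ev0 (zi (2 * int j + 1))"
proof -
  have "2 * int (Suc j) - 1 = 2 * int j + 1" by simp
  then show ?thesis unfolding zo_def by (simp only:)
qed

lemma ev0_of_int_mult: "ev0 (of_int k * p) = of_int k * ev0 p"
  by (simp add: ev0_mult)

lemma zo_nz: "j \<ge> 1 \<Longrightarrow> zo j \<noteq> 0"
  using zo_ne0(1)[of "j - 1"] zo_Suc[of "j - 1"] by simp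

lemma ev0_2n2: "ev0 (zi (2 * int n + 2)) = [:0,1:] * ev0 (zi (2 * int n + 1))"
  by (simp add: zr_odd ev0_add ev0_mult)

lemma zo_SucSuc: "zo (Suc (Suc j)) = QQ (Suc j) * zo (Suc j)"
proof -
  have e: "2 * int (Suc (Suc j)) - 1 = 2 * int j + 3" by simp
  have "zo (Suc (Suc j)) = [:0,1:] * ([:0,1:] * ev0 (zi (2 * int j + 1))) + of_int (16 * (2 * int j + 2)^2) * ev0 (zi (2 * int j + 1))"
    unfolding zo_def e zr_even2 by (simp only: ev0_add ev0_mult ev0_2n2 ev0_of_int ev0_gamma ev0_alpha mult_zero_left mult_zero_right add_0_right)
  also have "\<dots> = QQ (Suc j) * zo (Suc j)"
    unfolding zo_Suc QQ_def by (simp add: algebra_simps of_int_poly power2_eq_square)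
  finally show ?thesis .
qed

lemma dvd_pCons0: "(x :: complex poly) dvd pCons 0 x"
proof -
  have "pCons 0 x = x * [:0,1:]" by simp
  then show ?thesis by (metis dvd_triv_left)
qed

lemma zo_dvd_JJ: "j \<ge> 1 \<Longrightarrow> x \<in> JJ j \<Longrightarrow> zo j dvd ev0 x"
proof -
  assume "j \<ge> 1" "x \<in> JJ j"
  then obtain i where j: "j = Suc i" by (cases j) auto
  let ?S = "{x. zo (Suc i) dvd ev0 x}"
  have S: "is_ideal ?S" unfolding is_ideal_def by (auto simp: ev0_add ev0_mult intro: dvd_add dvd_mult)
  have e3: "ev0 (zi (2 * int i + 3)) = QQ (Suc i) * zo (Suc i)"
  proof -
    have "2 * int (Suc (Suc i)) - 1 = 2 * int i + 3" by simp
    then show ?thesis using zo_SucSuc[of i] unfolding zo_def by (simp only:)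
  qed
  have "JJ (Suc i) \<subseteq> ?S" unfolding JJ_Suc_def
    by (intro gen_ideal_least S) (auto simp: ev0_2n2 e3 zo_Suc dvd_pCons0)
  then show ?thesis using \<open>x \<in> JJ j\<close> j by auto
qed

lemma QQ_roots:
  assumes "j \<ge> 1" "poly w (8 * \<i> * of_nat j) = 0" "poly w (- (8 * \<i> * of_nat j)) = 0"
  shows "QQ j dvd w"
proof -
  let ?m = "8 * \<i> * of_nat j :: complex"
  have m0: "?m \<noteq> 0" using assms(1) by simp
  obtain w1 where w1: "w = [:- ?m, 1:] * w1" using assms(2) by (metis poly_eq_0_iff_dvd dvdE)
  have "poly w1 (- ?m) = 0" using assms(3) m0 unfolding w1 by simp
  then obtain w2 where w2: "w1 = [:- (- ?m), 1:] * w2" by (metis poly_eq_0_iff_dvd dvdE)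
  have msq: "?m * ?m = - (64 * (of_nat j)^2)"
  proof -
    have "?m * ?m = ?m ^ 2" by (simp add: power2_eq_square)
    also have "\<dots> = - (64 * (of_nat j)^2)" by (simp add: power_mult_distrib)
    finally show ?thesis .
  qed
  have "[:- ?m, 1:] * [:- (- ?m), 1:] = [:- (?m * ?m), 0, 1:]" by simp
  then have qq: "QQ j = [:- ?m, 1:] * [:- (- ?m), 1:]" unfolding QQ_def msq by simp
  have "w = ([:- ?m, 1:] * [:- (- ?m), 1:]) * w2" using w1 w2 by (simp only: mult.assoc)
  then show ?thesis unfolding qq by (metis dvd_triv_left)
qed

lemma QQ_root_iff: "poly (QQ j) \<mu> = 0 \<longleftrightarrow> \<mu> = 8 * \<i> * of_nat j \<or> \<mu> = - (8 * \<i> * of_nat j)"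
proof -
  have "poly (QQ j) \<mu> = (\<mu> - 8 * \<i> * of_nat j) * (\<mu> + 8 * \<i> * of_nat j)"
    by (simp add: QQ_def algebra_simps power2_eq_square)
  then show ?thesis by (simp add: eq_neg_iff_add_eq_0)
qed

definition psi :: "nat \<Rightarrow> complex \<Rightarrow> bpoly \<Rightarrow> complex" where
  "psi j \<mu> x = poly (ev0 x div zo j) \<mu>"

definition phi :: "nat \<Rightarrow> nat \<Rightarrow> complex \<Rightarrow> bpoly \<Rightarrow> complex" where
  "phi n j \<mu> p = psi j \<mu> ((DD ^^ (n - j)) p)"

definition phi0 :: "nat \<Rightarrow> bpoly \<Rightarrow> complex" where
  "phi0 n p = poly (ev0 ((DD ^^ n) p)) 0"

lemma psi_add: "psi j \<mu> (x + y) = psi j \<mu> x + psi j \<mu> y"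
  by (simp add: psi_def ev0_add poly_div_add_left)

lemma psi_diff: "psi j \<mu> (x - y) = psi j \<mu> x - psi j \<mu> y"
  by (simp add: psi_def ev0_diff poly_div_diff_left)

lemma psi_cst: "psi j \<mu> (cst c * x) = c * psi j \<mu> x"
  by (simp add: psi_def ev0_mult div_smult_left)

lemma psi_of_int: "psi j \<mu> (of_int k * x) = of_int k * psi j \<mu> x"
  using psi_cst[of j \<mu> "of_int k" x] by (simp add: of_int_bpoly)

lemma psi_gamma: "psi j \<mu> (gamma * x) = 0"
  by (simp add: psi_def)

lemma phi_add: "phi n j \<mu> (p + q) = phi n j \<mu> p + phi n j \<mu> q"
  by (simp add: phi_def DD_pow_add psi_add)

lemma phi_cst: "phi n j \<mu> (cst c * p) = c * phi n j \<mu> p"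
  by (simp add: phi_def DD_pow_cst psi_cst)

lemma phi0_add: "phi0 n (p + q) = phi0 n p + phi0 n q"
  by (simp add: phi0_def DD_pow_add ev0_add)

lemma phi0_cst: "phi0 n (cst c * p) = c * phi0 n p"
  by (simp add: phi0_def DD_pow_cst ev0_mult)

lemma phi_diff: "phi n j \<mu> (p - q) = phi n j \<mu> p - phi n j \<mu> q"
  using phi_add[of n j \<mu> "p - q" q] by simp

lemma phi0_diff: "phi0 n (p - q) = phi0 n p - phi0 n q"
  using phi0_add[of n "p - q" q] by simp

lemma phi_of_int: "phi n j \<mu> (of_int k * p) = of_int k * phi n j \<mu> p"
  using phi_cst[of n j \<mu> "of_int k" p] by (simp add: of_int_bpoly)

lemma phi0_of_int: "phi0 n (of_int k * p) = of_int k * phi0 n p"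
  using phi0_cst[of n "of_int k" p] by (simp add: of_int_bpoly)

lemma psi_vanish:
  assumes "j \<ge> 1" "x \<in> JJ (Suc j)" "poly (QQ j) \<mu> = 0"
  shows "psi j \<mu> x = 0"
proof -
  obtain w where w: "ev0 x = zo (Suc j) * w" using zo_dvd_JJ[OF _ assms(2)] by (auto elim: dvdE)
  obtain i where i: "j = Suc i" using assms(1) by (cases j) auto
  have e: "ev0 x = zo j * (QQ j * w)" unfolding w i zo_SucSuc by (simp add: algebra_simps)
  have "ev0 x div zo j = QQ j * w" unfolding e using zo_nz[OF assms(1)] by (rule nonzero_mult_div_cancel_left)
  then show ?thesis using assms(3) by (simp add: psi_def)
qed

lemma phi_vanish:
  assumes "p \<in> JJ (Suc n)" "1 \<le> j" "j \<le> n" "poly (QQ j) \<mu> = 0"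
  shows "phi n j \<mu> p = 0"
proof -
  have "(DD ^^ (n - j)) p \<in> JJ (Suc j)" using assms DD_pow_JJ[of p "Suc j" "n - j"] by simp
  then show ?thesis unfolding phi_def using psi_vanish[OF assms(2) _ assms(4)] by simp
qed

lemma ev0_JJ1: "x \<in> JJ 1 \<Longrightarrow> poly (ev0 x) 0 = 0"
proof -
  assume "x \<in> JJ 1"
  then have "zo 1 dvd ev0 x" by (rule zo_dvd_JJ[rotated]) simp
  moreover have "zo 1 = [:0,1:]" by (simp add: zo_def)
  ultimately show ?thesis by (auto elim: dvdE)
qed

lemma phi0_vanish: "p \<in> JJ (Suc n) \<Longrightarrow> phi0 n p = 0"
  unfolding phi0_def using DD_pow_JJ[of p 1 n] ev0_JJ1 by simp

lemma phi_gamma: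
  assumes "j \<le> n"
  shows "phi (Suc n) j \<mu> (gamma * q) = - 16 * of_nat (Suc n - j) * phi n j \<mu> q"
proof -
  obtain k where k: "Suc n - j = Suc k" "n - j = k" using assms by (metis Suc_diff_le diff_Suc_Suc)
  show ?thesis unfolding phi_def k DD_pow_gamma psi_diff psi_gamma psi_of_int
    by (simp add: algebra_simps)
qed

lemma phi0_gamma: "phi0 (Suc n) (gamma * q) = - 16 * of_nat (Suc n) * phi0 n q"
  unfolding phi0_def DD_pow_gamma ev0_diff ev0_mult ev0_of_int ev0_gamma by (simp add: algebra_simps)

lemma phi_alpha:
  assumes "p \<in> JJ n" "1 \<le> j" "j \<le> n" "poly (QQ j) \<mu> = 0"
  shows "phi n j \<mu> (alpha * p) = \<mu> * phi n j \<mu> p"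
proof -
  have top: "psi j \<mu> (alpha * x) = \<mu> * psi j \<mu> x" if xJ: "x \<in> JJ j" for x
  proof -
    obtain w where w: "ev0 x = zo j * w" using zo_dvd_JJ[OF assms(2) xJ] by (auto elim: dvdE)
    have a: "ev0 (alpha * x) = zo j * ([:0,1:] * w)" using w by (simp add: ev0_mult algebra_simps)
    have "ev0 (alpha * x) div zo j = [:0,1:] * w" unfolding a using zo_nz[OF assms(2)]
      by (rule nonzero_mult_div_cancel_left)
    moreover have "ev0 x div zo j = w" unfolding w using zo_nz[OF assms(2)]
      by (rule nonzero_mult_div_cancel_left)
    ultimately show ?thesis by (simp add: psi_def)
  qed
  show ?thesis
  proof (cases "n = j")
    case True then show ?thesis unfolding phi_def using top[OF assms(1)[unfolded True]] True by simp
  next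
    case False
    then obtain k where k: "n - j = Suc k" using assms(3) by (metis Suc_diff_Suc le_neq_implies_less)
    have nn: "n = j + Suc k" "n = Suc j + k" using assms(3) k by arith+
    have x1: "(DD ^^ Suc k) p \<in> JJ j" by (rule DD_pow_JJ) (use assms(1) nn(1) in simp)
    have x2: "(DD ^^ k) p \<in> JJ (Suc j)" by (rule DD_pow_JJ) (use assms(1) nn(2) in simp)
    have "phi n j \<mu> (alpha * p) = psi j \<mu> (alpha * (DD ^^ Suc k) p)
          + of_int (int (Suc k)) * psi j \<mu> ((DD ^^ k) p)"
      unfolding phi_def k DD_pow_alpha by (simp only: psi_add psi_of_int)
    also have "psi j \<mu> ((DD ^^ k) p) = 0" using psi_vanish[OF assms(2) x2 assms(4)] .
    finally show ?thesis unfolding phi_def k using top[OF x1] by simp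
  qed
qed

lemma phi0_alpha:
  assumes "p \<in> JJ n"
  shows "phi0 n (alpha * p) = 0"
proof (cases n)
  case 0 then show ?thesis by (simp add: phi0_def ev0_mult)
next
  case (Suc k)
  have x2: "(DD ^^ k) p \<in> JJ 1" using DD_pow_JJ[of p 1 k] assms Suc by simp
  show ?thesis unfolding phi0_def Suc DD_pow_alpha
    using ev0_JJ1[OF x2] by (simp add: ev0_add ev0_mult ev0_of_int_mult)
qed

lemma lift_pCons: "lift (pCons c e) = cst c + alpha * lift e"
  by (rule poly_eqI) (simp add: coeff_lift cst_def alpha_mult coeff_pCons split: nat.splits)

lemma lift_mult_JJ: "p \<in> JJ n \<Longrightarrow> lift e * p \<in> JJ n"
  by (rule JJ_mult)

lemma phi_lift:
  assumes "p \<in> JJ n" "1 \<le> j" "j \<le> n" "poly (QQ j) \<mu> = 0"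
  shows "phi n j \<mu> (lift e * p) = poly e \<mu> * phi n j \<mu> p"
proof (induction e)
  case 0 then show ?case by (simp add: lift_def phi_def psi_def)
next
  case (pCons c e)
  have "phi n j \<mu> (lift (pCons c e) * p) = c * phi n j \<mu> p + phi n j \<mu> (alpha * (lift e * p))"
    unfolding lift_pCons by (simp add: distrib_right phi_add phi_cst mult.assoc)
  also have "phi n j \<mu> (alpha * (lift e * p)) = \<mu> * (poly e \<mu> * phi n j \<mu> p)"
    using phi_alpha[OF JJ_mult[OF assms(1)] assms(2-4)] pCons(2) by simp
  finally show ?case by (simp add: algebra_simps)
qed

lemma phi0_lift:
  assumes "p \<in> JJ n"
  shows "phi0 n (lift e * p) = poly e 0 * phi0 n p"
proof (induction e)
  case 0 then show ?case by (simp add: lift_def phi0_def)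
next
  case (pCons c e)
  have "phi0 n (lift (pCons c e) * p) = c * phi0 n p + phi0 n (alpha * (lift e * p))"
    unfolding lift_pCons by (simp add: distrib_right phi0_add phi0_cst mult.assoc)
  also have "phi0 n (alpha * (lift e * p)) = 0"
    using phi0_alpha[OF JJ_mult[OF assms]] by simp
  finally show ?case by simp
qed

lemma phi_mult:
  assumes "p \<in> JJ n" "1 \<le> j" "j \<le> n" "poly (QQ j) \<mu> = 0"
  shows "phi n j \<mu> (a * p) = poly (ev0 a) \<mu> * phi n j \<mu> p"
proof -
  have "a * p = lift (ev0 a) * p + gamma * (tl0 a * p)"
    by (subst decomp0[of a]) (simp add: algebra_simps)
  moreover have "phi n j \<mu> (gamma * (tl0 a * p)) = 0"
    using phi_vanish[OF gamma_JJ[OF JJ_mult[OF assms(1)]] assms(2-4)] .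
  ultimately show ?thesis using phi_lift[OF assms] by (simp add: phi_add)
qed

lemma phi0_mult:
  assumes "p \<in> JJ n"
  shows "phi0 n (a * p) = poly (ev0 a) 0 * phi0 n p"
proof -
  have "a * p = lift (ev0 a) * p + gamma * (tl0 a * p)"
    by (subst decomp0[of a]) (simp add: algebra_simps)
  moreover have "phi0 n (gamma * (tl0 a * p)) = 0"
    using phi0_vanish[OF gamma_JJ[OF JJ_mult[OF assms]]] .
  ultimately show ?thesis using phi0_lift[OF assms] by (simp add: phi0_add)
qed



lemma lift_X: "lift [:0,1:] = alpha"
  by (rule poly_eqI) (simp add: coeff_lift alpha_def coeff_pCons split: nat.splits)

lemma alpha_JJ1: "alpha \<in> JJ 1"
  using JJ_gens(1)[of 1] by simp

lemma gamma_JJ1: "gamma \<in> JJ 1"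
  using gamma_JJ[of 1 0] by (simp add: JJ_0_UNIV)

lemma QQ_roots_Suc: "poly (QQ (Suc n)) (8 * \<i> * of_nat (Suc n)) = 0" "poly (QQ (Suc n)) (- (8 * \<i> * of_nat (Suc n))) = 0"
  by (simp_all add: QQ_root_iff)

lemma zi_2n3_JJ2: "zi (2 * int n + 3) \<in> JJ (Suc (Suc n))"
proof -
  have e: "2 * int (Suc n) + 1 = 2 * int n + 3" by simp
  show ?thesis using JJ_Suc_gens(1)[of "Suc n"] unfolding e .
qed

lemma ev0_2n3: "ev0 (zi (2 * int n + 3)) = QQ (Suc n) * zo (Suc n)"
proof -
  have "2 * int (Suc (Suc n)) - 1 = 2 * int n + 3" by simp
  then show ?thesis using zo_SucSuc[of n] unfolding zo_def by (simp only:)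
qed

lemma complete:
  assumes "p \<in> JJ n" "phi0 n p = 0" "\<And>j \<mu>. 1 \<le> j \<Longrightarrow> j \<le> n \<Longrightarrow> poly (QQ j) \<mu> = 0 \<Longrightarrow> phi n j \<mu> p = 0"
  shows "p \<in> JJ (Suc n)"
  using assms
proof (induction n arbitrary: p)
  case 0
  have e: "poly (ev0 p) 0 = 0" using "0.prems"(2) by (simp add: phi0_def)
  then obtain e' where e': "ev0 p = [:0,1:] * e'" using poly_eq_0_iff_dvd[of "ev0 p" 0] by (auto elim: dvdE)
  have "p = alpha * lift e' + gamma * tl0 p"
    using decomp0[of p] unfolding e' lift_mult lift_X .
  also have "\<dots> \<in> JJ 1" using alpha_JJ1 gamma_JJ1 by (simp add: JJ_add JJ_mult_right)
  finally show ?case by simp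
next
  case (Suc n)
  let ?Z3 = "zi (2 * int n + 3)"
  obtain w where w: "ev0 p = zo (Suc n) * w" using zo_dvd_JJ[of "Suc n" p] Suc.prems(1) by (auto elim: dvdE)
  have nz: "zo (Suc n) \<noteq> 0" by (rule zo_nz) simp
  have pw: "phi (Suc n) (Suc n) \<mu> p = poly w \<mu>" for \<mu>
    unfolding phi_def psi_def using w nz by simp
  have "poly w (8 * \<i> * of_nat (Suc n)) = 0" "poly w (- (8 * \<i> * of_nat (Suc n))) = 0"
    using Suc.prems(3)[of "Suc n"] QQ_roots_Suc pw by auto
  then have "QQ (Suc n) dvd w" by (intro QQ_roots) auto
  then obtain w2 where w2: "w = QQ (Suc n) * w2" by (auto elim: dvdE)
  define s where "s = lift w2"
  have "ev0 (p - s * ?Z3) = 0" unfolding s_def ev0_diff ev0_mult ev0_lift w w2 ev0_2n3 by (simp add: algebra_simps)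
  then have pq: "p - s * ?Z3 = gamma * tl0 (p - s * ?Z3)" by (rule ev0_eq0_gamma)
  define q where "q = tl0 (p - s * ?Z3)"
  have sZ: "s * ?Z3 \<in> JJ (Suc (Suc n))" using zi_2n3_JJ2 by (rule JJ_mult)
  have "gamma * q \<in> JJ (Suc n)" unfolding q_def pq[symmetric]
    using Suc.prems(1) JJ_Suc_gens(3) by (simp add: JJ_diff JJ_mult)
  then have qJ: "q \<in> JJ n" by (rule JJ_colon)
  have pe: "p = s * ?Z3 + gamma * q" using pq unfolding q_def[symmetric] by (simp add: algebra_simps)
  have "phi0 n q = 0"
  proof -
    have "0 = phi0 (Suc n) p" using Suc.prems(2) by simp
    also have "\<dots> = phi0 (Suc n) (s * ?Z3) + phi0 (Suc n) (gamma * q)" unfolding pe by (rule phi0_add)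
    also have "\<dots> = - 16 * of_nat (Suc n) * phi0 n q" using phi0_vanish[OF sZ] phi0_gamma by simp
    finally have z: "- 16 * of_nat (Suc n) * phi0 n q = 0" by simp
    have c: "(- 16 * of_nat (Suc n) :: complex) \<noteq> 0"
      by (simp only: mult_eq_0_iff neg_equal_0_iff_equal of_nat_eq_0_iff) simp
    show ?thesis using z c by (metis mult_eq_0_iff)
  qed
  moreover have "phi n j \<mu> q = 0" if j: "1 \<le> j" "j \<le> n" "poly (QQ j) \<mu> = 0" for j \<mu>
  proof -
    have "0 = phi (Suc n) j \<mu> p" using Suc.prems(3)[of j \<mu>] j by simp
    also have "\<dots> = phi (Suc n) j \<mu> (s * ?Z3) + phi (Suc n) j \<mu> (gamma * q)" unfolding pe by (rule phi_add)
    also have "\<dots> = - 16 * of_nat (Suc n - j) * phi n j \<mu> q"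
      using phi_vanish[OF sZ, of j \<mu>] j phi_gamma[of j n \<mu> q] by simp
    finally have z: "0 = - 16 * of_nat (Suc n - j) * phi n j \<mu> q" .
    have c: "(- 16 * of_nat (Suc n - j) :: complex) \<noteq> 0"
      using j(2) by (simp only: mult_eq_0_iff neg_equal_0_iff_equal of_nat_eq_0_iff) simp
    show ?thesis using z c by (metis mult_eq_0_iff)
  qed
  ultimately have "q \<in> JJ (Suc n)" using Suc.IH[OF qJ] by blast
  then have "gamma * q \<in> JJ (Suc (Suc n))" by (rule gamma_JJ)
  then show ?case unfolding pe using sZ by (simp add: JJ_add)
qed

lemma phi_step: "j \<le> m \<Longrightarrow> phi (Suc m) j \<mu> p = phi m j \<mu> (DD p)"
proof -
  assume "j \<le> m"
  then have "Suc m - j = Suc (m - j)" by simp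
  then show ?thesis unfolding phi_def by (simp add: funpow_Suc_right del: funpow.simps)
qed

lemma phi0_step: "phi0 (Suc m) p = phi0 m (DD p)"
  unfolding phi0_def by (simp add: funpow_Suc_right del: funpow.simps)

lemma dzeta_even: "DD (zi (2 * int m + 2)) = of_int (2 * int m + 2) * (zi (2 * int m + 1) - of_int (16 * (2 * int m) * (2 * int m + 1)) * zi (2 * int m - 1))"
proof -
  have e: "2 * int m + 2 - 1 = 2 * int m + 1" "2 * int m + 2 - 3 = 2 * int m - 1" "2 * int m + 2 - 2 = 2 * int m" by simp_all
  show ?thesis unfolding DD_zi dzeta_def e by simp
qed

lemma dzeta_odd: "DD (zi (2 * int m + 1)) = of_int (2 * int m + 1) * zi (2 * int m)"
  unfolding DD_zi dzeta_def by simp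

definition XX where "XX m j \<mu> = phi m j \<mu> (zi (2 * int m))"
definition YY where "YY m j \<mu> = phi m j \<mu> (zi (2 * int m - 1))"
definition X0 where "X0 m = phi0 m (zi (2 * int m))"
definition Y0 where "Y0 m = phi0 m (zi (2 * int m - 1))"

lemma zi_Suc_conv: "zi (2 * int (Suc m)) = zi (2 * int m + 2)" "zi (2 * int (Suc m) - 1) = zi (2 * int m + 1)"
proof -
  have "2 * int (Suc m) = 2 * int m + 2" "2 * int (Suc m) - 1 = 2 * int m + 1" by simp_all
  then show "zi (2 * int (Suc m)) = zi (2 * int m + 2)" "zi (2 * int (Suc m) - 1) = zi (2 * int m + 1)" by (simp_all only:)
qed

lemma XX_Suc:
  assumes "1 \<le> j" "j \<le> m" "poly (QQ j) \<mu> = 0"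
  shows "XX (Suc m) j \<mu> = - (of_int (2 * int m + 2) * of_int (16 * (2 * int m) * (2 * int m + 1))) * YY m j \<mu>"
proof -
  have v: "phi m j \<mu> (zi (2 * int m + 1)) = 0" using phi_vanish[OF JJ_Suc_gens(1) assms] .
  show ?thesis unfolding XX_def YY_def zi_Suc_conv phi_step[OF assms(2)] dzeta_even phi_of_int phi_diff v
    by simp
qed

lemma YY_Suc:
  assumes "j \<le> m"
  shows "YY (Suc m) j \<mu> = of_int (2 * int m + 1) * XX m j \<mu>"
  unfolding XX_def YY_def zi_Suc_conv phi_step[OF assms] dzeta_odd phi_of_int ..

lemma X0_Suc: "X0 (Suc m) = - (of_int (2 * int m + 2) * of_int (16 * (2 * int m) * (2 * int m + 1))) * Y0 m"
proof -
  have v: "phi0 m (zi (2 * int m + 1)) = 0" using phi0_vanish[OF JJ_Suc_gens(1)] .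
  show ?thesis unfolding X0_def Y0_def zi_Suc_conv phi0_step dzeta_even phi0_of_int phi0_diff v
    by simp
qed

lemma Y0_Suc: "Y0 (Suc m) = of_int (2 * int m + 1) * X0 m"
  unfolding X0_def Y0_def zi_Suc_conv phi0_step dzeta_odd phi0_of_int ..

lemma XY_base:
  assumes "1 \<le> j"
  shows "XX j j \<mu> = \<mu>" "YY j j \<mu> = 1"
proof -
  obtain i where i: "j = Suc i" using assms by (cases j) auto
  have nz: "zo j \<noteq> 0" using zo_nz[OF assms] .
  have "ev0 (zi (2 * int j)) = zo j * [:0,1:]" unfolding i zi_Suc_conv zo_Suc ev0_2n2 by (simp add: mult.commute)
  then have "ev0 (zi (2 * int j)) div zo j = [:0,1:]" by (simp only: nonzero_mult_div_cancel_left[OF nz])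
  then show "XX j j \<mu> = \<mu>" unfolding XX_def phi_def psi_def by simp
  have "ev0 (zi (2 * int j - 1)) = zo j * 1" by (simp add: zo_def)
  then have "ev0 (zi (2 * int j - 1)) div zo j = 1" by (simp only: nonzero_mult_div_cancel_left[OF nz])
  then show "YY j j \<mu> = 1" unfolding YY_def phi_def psi_def by simp
qed

lemma QQ_root_nz: "1 \<le> j \<Longrightarrow> poly (QQ j) \<mu> = 0 \<Longrightarrow> \<mu> \<noteq> 0"
  by (auto simp: QQ_root_iff)

lemma XY_nz:
  assumes "1 \<le> j" "poly (QQ j) \<mu> = 0"
  shows "XX (j + d) j \<mu> \<noteq> 0 \<and> YY (j + d) j \<mu> \<noteq> 0"
proof (induction d)
  case 0 then show ?case using XY_base[OF assms(1)] QQ_root_nz[OF assms] by simp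
next
  case (Suc d)
  have m1: "j + d \<ge> 1" using assms(1) by simp
  have c2: "(of_int (2 * int (j + d) + 2) :: complex) \<noteq> 0" by (subst of_int_eq_0_iff) simp
  have c3: "(of_int (16 * (2 * int (j + d)) * (2 * int (j + d) + 1)) :: complex) \<noteq> 0"
    using m1 by (subst of_int_eq_0_iff) simp
  have "XX (Suc (j + d)) j \<mu> = - (of_int (2 * int (j + d) + 2) * of_int (16 * (2 * int (j + d)) * (2 * int (j + d) + 1))) * YY (j + d) j \<mu>"
    by (rule XX_Suc) (use assms in auto)
  then have "XX (Suc (j + d)) j \<mu> \<noteq> 0" using Suc.IH c2 c3 by (simp only: mult_eq_0_iff neg_equal_0_iff_equal) simp
  moreover have c1: "(of_int (2 * int (j + d) + 1) :: complex) \<noteq> 0" by (subst of_int_eq_0_iff) presburger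
  moreover have "YY (Suc (j + d)) j \<mu> \<noteq> 0"
    unfolding YY_Suc[of j "j + d", OF le_add1] using Suc.IH c1 by simp
  ultimately show ?case by simp
qed

lemma XY0_parity: "(even m \<longrightarrow> X0 m \<noteq> 0 \<and> Y0 m = 0) \<and> (odd m \<longrightarrow> X0 m = 0 \<and> Y0 m \<noteq> 0)"
proof (induction m)
  case 0 then show ?case by (simp add: X0_def Y0_def phi0_def)
next
  case (Suc m)
  have c1: "(of_int (2 * int m + 1) :: complex) \<noteq> 0" by (subst of_int_eq_0_iff) presburger
  have c2: "(of_int (2 * int m + 2) :: complex) \<noteq> 0" by (subst of_int_eq_0_iff) simp
  show ?case
  proof (cases "even m")
    case True
    then show ?thesis using Suc.IH c1 unfolding X0_Suc Y0_Suc by simp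
  next
    case False
    then have "m \<ge> 1" by (cases m) auto
    then have c3: "(of_int (16 * (2 * int m) * (2 * int m + 1)) :: complex) \<noteq> 0"
      by (subst of_int_eq_0_iff) simp
    then show ?thesis using Suc.IH False c2 unfolding X0_Suc Y0_Suc by simp
  qed
qed

lemma phi0_gamma_pow: "phi0 m (gamma ^ m) = (- 16) ^ m * fact m"
proof (induction m)
  case 0 then show ?case by (simp add: phi0_def)
next
  case (Suc m)
  show ?case unfolding power_Suc phi0_gamma Suc by (simp add: algebra_simps)
qed

lemma phi_gamma_pow: "1 \<le> j \<Longrightarrow> j \<le> m \<Longrightarrow> phi m j \<mu> (gamma ^ m) = 0"
proof (induction m arbitrary: j)
  case 0 then show ?case by simp
next
  case (Suc m)
  show ?case
  proof (cases "j = Suc m")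
    case True then show ?thesis by (simp add: phi_def psi_gamma)
  next
    case False
    then have "j \<le> m" using Suc.prems by simp
    then show ?thesis unfolding power_Suc phi_gamma[OF \<open>j \<le> m\<close>] using Suc.IH[OF Suc.prems(1)] by simp
  qed
qed

lemma interp:
  fixes S :: "complex set" and v :: "complex \<Rightarrow> complex"
  shows "finite S \<Longrightarrow> \<exists>t. \<forall>s\<in>S. poly t s = v s"
proof (induction S rule: finite_induct)
  case empty then show ?case by simp
next
  case (insert x S)
  obtain t0 where t0: "\<forall>s\<in>S. poly t0 s = v s" using insert.IH by blast
  define w where "w = (\<Prod>s\<in>S. [:- s, 1:])"
  have w0: "poly w s = 0" if "s \<in> S" for s
    unfolding w_def poly_prod using insert.hyps(1) that by (auto intro: prod_zero)
  have wx: "poly w x \<noteq> 0" unfolding w_def poly_prod using insert.hyps by auto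
  define t where "t = t0 + smult ((v x - poly t0 x) / poly w x) w"
  have "\<forall>s\<in>insert x S. poly t s = v s" using t0 w0 wx by (auto simp: t_def)
  then show ?case by blast
qed

definition roots_upto :: "nat \<Rightarrow> complex set" where
  "roots_upto n = {\<mu>. \<exists>j. 1 \<le> j \<and> j \<le> n \<and> poly (QQ j) \<mu> = 0}"

lemma QQ_ne0: "QQ j \<noteq> 0" by (simp add: QQ_def)

lemma finite_roots_upto: "finite (roots_upto n)"
proof -
  have "roots_upto n \<subseteq> (\<Union>j\<in>{1..n}. {\<mu>. poly (QQ j) \<mu> = 0})" unfolding roots_upto_def by auto
  moreover have "finite (\<Union>j\<in>{1..n}. {\<mu>. poly (QQ j) \<mu> = 0})"
    using poly_roots_finite[OF QQ_ne0] by auto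
  ultimately show ?thesis by (rule finite_subset)
qed

lemma QQ_root_unique: "1 \<le> j \<Longrightarrow> 1 \<le> j' \<Longrightarrow> poly (QQ j) \<mu> = 0 \<Longrightarrow> poly (QQ j') \<mu> = 0 \<Longrightarrow> j = j'"
proof -
  assume a: "1 \<le> j" "1 \<le> j'" "poly (QQ j) \<mu> = 0" "poly (QQ j') \<mu> = 0"
  have "\<mu> * \<mu> = - (64 * (of_nat j)^2)" "\<mu> * \<mu> = - (64 * (of_nat j')^2)"
    using a(3,4) by (simp_all add: QQ_def algebra_simps eq_neg_iff_add_eq_0 power2_eq_square)
  then have "(of_nat j :: complex)^2 = (of_nat j')^2" by simp
  then have "(of_nat (j^2) :: complex) = of_nat (j'^2)" by simp
  then have "j^2 = j'^2" by (simp only: of_nat_eq_iff)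
  then show "j = j'" using power_eq_iff_eq_base[of 2 j j'] by simp
qed

lemma key_even:
  assumes "n \<ge> 1"
  shows "\<exists>t c. zi (2 * int n - 1) - lift t * zi (2 * int n) - cst c * gamma ^ n \<in> JJ (Suc n) \<and> (even n \<longrightarrow> c = 0)"
proof -
  define v where "v \<mu> = (if \<mu> = 0 then 0 else
      (SOME w. \<forall>j. 1 \<le> j \<and> j \<le> n \<and> poly (QQ j) \<mu> = 0 \<longrightarrow> w * XX n j \<mu> = YY n j \<mu>))" for \<mu>
  obtain t where t: "\<forall>s\<in>insert 0 (roots_upto n). poly t s = v s"
    using interp[of "insert 0 (roots_upto n)" v] finite_roots_upto by auto
  have t0: "poly t 0 = 0" using t by (simp add: v_def)
  have tr: "poly t \<mu> * XX n j \<mu> = YY n j \<mu>" if j: "1 \<le> j" "j \<le> n" "poly (QQ j) \<mu> = 0" for j \<mu>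
  proof -
    have mu: "\<mu> \<noteq> 0" using QQ_root_nz[OF j(1,3)] .
    have "\<mu> \<in> roots_upto n" unfolding roots_upto_def using j by auto
    then have pt: "poly t \<mu> = (SOME w. \<forall>j. 1 \<le> j \<and> j \<le> n \<and> poly (QQ j) \<mu> = 0 \<longrightarrow> w * XX n j \<mu> = YY n j \<mu>)"
      using t mu by (simp add: v_def)
    have xnz: "XX n j \<mu> \<noteq> 0" using XY_nz[OF j(1,3), of "n - j"] j(2) by simp
    have ex: "\<exists>w. \<forall>j'. 1 \<le> j' \<and> j' \<le> n \<and> poly (QQ j') \<mu> = 0 \<longrightarrow> w * XX n j' \<mu> = YY n j' \<mu>"
    proof (intro exI allI impI)
      fix j' assume "1 \<le> j' \<and> j' \<le> n \<and> poly (QQ j') \<mu> = 0"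
      then have "j' = j" using QQ_root_unique[of j' j \<mu>] j by auto
      then show "YY n j \<mu> / XX n j \<mu> * XX n j' \<mu> = YY n j' \<mu>" using xnz by simp
    qed
    show ?thesis unfolding pt using someI_ex[OF ex] j by blast
  qed
  define c where "c = (if even n then 0 else Y0 n / phi0 n (gamma ^ n))"
  define q where "q = zi (2 * int n - 1) - lift t * zi (2 * int n) - cst c * gamma ^ n"
  have gJ: "gamma ^ n \<in> JJ n" by (rule gamma_pow_in_JJ)
  have qJ: "q \<in> JJ n" unfolding q_def using JJ_gens gJ by (simp add: JJ_diff JJ_mult)
  have p0: "phi0 n (gamma ^ n) \<noteq> 0" unfolding phi0_gamma_pow by simp
  have "phi0 n q = Y0 n - poly t 0 * X0 n - c * phi0 n (gamma ^ n)"
    unfolding q_def phi0_diff phi0_cst phi0_mult[OF JJ_gens(2)] X0_def Y0_def by simp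
  also have "\<dots> = 0" using XY0_parity[of n] t0 p0 by (auto simp: c_def)
  finally have q0: "phi0 n q = 0" .
  have qj: "phi n j \<mu> q = 0" if j: "1 \<le> j" "j \<le> n" "poly (QQ j) \<mu> = 0" for j \<mu>
  proof -
    have "phi n j \<mu> q = YY n j \<mu> - poly t \<mu> * XX n j \<mu> - c * phi n j \<mu> (gamma ^ n)"
      unfolding q_def phi_diff phi_cst phi_mult[OF JJ_gens(2) j] XX_def YY_def by simp
    then show ?thesis using tr[OF j] phi_gamma_pow[OF j(1,2)] by simp
  qed
  have qS: "q \<in> JJ (Suc n)" using complete[OF qJ q0 qj] by blast
  have ce: "even n \<longrightarrow> c = 0" by (simp add: c_def)
  show ?thesis using qS ce unfolding q_def by blast
qed

section \<open>The even ideals\<close>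

definition HH :: "nat \<Rightarrow> bpoly set" where
  "HH n = gen_ideal {zi (2 * int n), zi (2 * int n + 1), zi (2 * int n + 2)}"

lemma HH_ideal: "is_ideal (HH n)" unfolding HH_def by (rule gi)

lemma HH_gens: "zi (2 * int n) \<in> HH n" "zi (2 * int n + 1) \<in> HH n" "zi (2 * int n + 2) \<in> HH n"
  unfolding HH_def by (auto intro: gen_ideal_mem)

lemma HH_sub_JJ: "HH n \<subseteq> JJ n"
  unfolding HH_def using JJ_gens zi_2n2_JJ by (intro gen_ideal_least JJ_ideal) auto

lemma JJ_Suc_sub_HH: "JJ (Suc n) \<subseteq> HH n"
proof -
  have "zi (2 * int n + 3) \<in> HH n"
    unfolding zr_even2 using HH_gens HH_ideal
    by (intro is_idealD(2)[OF HH_ideal] is_idealD(3)[OF HH_ideal]) (auto intro: is_idealD(3)[OF HH_ideal] ideal_mult_right)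
  then show ?thesis unfolding JJ_Suc_def using HH_gens by (intro gen_ideal_least HH_ideal) auto
qed

lemma HH_dec:
  assumes "x \<in> HH n"
  shows "\<exists>a y. y \<in> JJ (Suc n) \<and> x = y + a * zi (2 * int n)"
proof -
  define z where "z = zi (2 * int n)"
  let ?D = "{x. \<exists>a y. y \<in> JJ (Suc n) \<and> x = y + a * z}"
  have D: "is_ideal ?D" unfolding is_ideal_def
  proof (intro conjI ballI allI)
    show "0 \<in> ?D" using JJ_0 by (auto intro!: exI[of _ 0])
  next
    fix x y assume "x \<in> ?D" "y \<in> ?D"
    then obtain a r b s where h: "r \<in> JJ (Suc n)" "x = r + a * z" "s \<in> JJ (Suc n)" "y = s + b * z" by blast
    have "x + y = (r + s) + (a + b) * z" unfolding h(2,4) by (simp add: algebra_simps)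
    then show "x + y \<in> ?D" using JJ_add[OF h(1,3)] by blast
  next
    fix c x assume "x \<in> ?D"
    then obtain a r where h: "r \<in> JJ (Suc n)" "x = r + a * z" by blast
    have "c * x = c * r + (c * a) * z" unfolding h(2) by (simp add: algebra_simps)
    then show "c * x \<in> ?D" using JJ_mult[OF h(1)] by blast
  qed
  have g1: "z \<in> ?D"
  proof -
    have "z = 0 + 1 * z" by simp
    then show ?thesis using JJ_0 by blast
  qed
  have g2: "zi (2 * int n + 1) \<in> ?D"
  proof -
    have "zi (2 * int n + 1) = zi (2 * int n + 1) + 0 * z" by simp
    then show ?thesis using JJ_Suc_gens(1) by blast
  qed
  have g3: "zi (2 * int n + 2) \<in> ?D"
  proof -
    have "zi (2 * int n + 2) = zi (2 * int n + 2) + 0 * z" by simp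
    then show ?thesis using JJ_Suc_gens(2) by blast
  qed
  have "HH n \<subseteq> ?D" unfolding HH_def z_def[symmetric] using g1 g2 g3 by (intro gen_ideal_least D) auto
  then show ?thesis using assms unfolding z_def by auto
qed

lemma HH_even:
  assumes "n \<ge> 1" "even n" shows "HH n = JJ n"
proof
  show "HH n \<subseteq> JJ n" by (rule HH_sub_JJ)
  obtain t c where tc: "zi (2 * int n - 1) - lift t * zi (2 * int n) - cst c * gamma ^ n \<in> JJ (Suc n)" "even n \<longrightarrow> c = 0"
    using key_even[OF assms(1)] by blast
  have c: "c = 0" using tc(2) assms(2) by simp
  have "zi (2 * int n - 1) = (zi (2 * int n - 1) - lift t * zi (2 * int n) - cst c * gamma ^ n) + lift t * zi (2 * int n)"
    using c by simp
  also have "\<dots> \<in> HH n" using tc(1) JJ_Suc_sub_HH HH_gens(1)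
    by (intro is_idealD(2)[OF HH_ideal] is_idealD(3)[OF HH_ideal]) auto
  finally have "zi (2 * int n - 1) \<in> HH n" .
  then show "JJ n \<subseteq> HH n" unfolding JJ_def using HH_gens by (intro gen_ideal_least HH_ideal) auto
qed

lemma HH_odd:
  assumes "n \<ge> 1"
  shows "\<exists>c. zi (2 * int n - 1) - cst c * gamma ^ n \<in> HH n"
proof -
  obtain t c where tc: "zi (2 * int n - 1) - lift t * zi (2 * int n) - cst c * gamma ^ n \<in> JJ (Suc n)"
    using key_even[OF assms(1)] by blast
  have "zi (2 * int n - 1) - cst c * gamma ^ n = (zi (2 * int n - 1) - lift t * zi (2 * int n) - cst c * gamma ^ n) + lift t * zi (2 * int n)"
    by simp
  also have "\<dots> \<in> HH n" using tc(1) JJ_Suc_sub_HH HH_gens(1)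
    by (intro is_idealD(2)[OF HH_ideal] is_idealD(3)[OF HH_ideal]) auto
  finally show ?thesis by blast
qed

lemma gamma_pow_notin_HH:
  assumes "odd n" shows "gamma ^ n \<notin> HH n"
proof
  assume "gamma ^ n \<in> HH n"
  then obtain a y where y: "y \<in> JJ (Suc n)" "gamma ^ n = y + a * zi (2 * int n)" using HH_dec by blast
  have "phi0 n (gamma ^ n) = phi0 n y + phi0 n (a * zi (2 * int n))" unfolding y(2) by (rule phi0_add)
  also have "\<dots> = 0" using phi0_vanish[OF y(1)] phi0_mult[OF JJ_gens(2)] XY0_parity[of n] assms
    by (simp add: X0_def)
  finally show False unfolding phi0_gamma_pow by simp
qed



interpretation bvs: vector_space "\<lambda>c (p::bpoly). cst c * p"
  by unfold_locales (simp_all add: cst_add cst_mult_cst distrib_left distrib_right mult.assoc[symmetric])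

lemma span_bound:
  assumes bm: "basis_mod J B" and I: "is_ideal J" and S: "finite S" "spans_mod J S"
  shows "card B \<le> card S"
proof -
  obtain d where d: "\<And>p. p - (\<Sum>s\<in>S. cst (d p s) * s) \<in> J"
    using S(2) unfolding spans_mod_def by metis
  define w where "w b = (\<Sum>s\<in>S. cst (d b s) * s)" for b
  have fB: "finite B" using bm unfolding basis_mod_def by blast
  have ind: "\<And>c. (\<Sum>b\<in>B. cst (c b) * b) \<in> J \<Longrightarrow> \<forall>b\<in>B. c b = 0"
    using bm unfolding basis_mod_def by blast
  have key: "\<forall>b\<in>B. c b = 0" if z: "(\<Sum>b\<in>B. cst (c b) * w b) = 0" for c
  proof -
    have "(\<Sum>b\<in>B. cst (c b) * b) = (\<Sum>b\<in>B. cst (c b) * (b - w b)) + (\<Sum>b\<in>B. cst (c b) * w b)"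
      by (simp add: sum.distrib[symmetric] algebra_simps)
    also have "\<dots> = (\<Sum>b\<in>B. cst (c b) * (b - w b))" using z by simp
    also have "\<dots> \<in> J" using d I by (intro ideal_sum[OF I]) (auto simp: w_def intro: is_idealD(3))
    finally show ?thesis by (rule ind)
  qed
  have inj: "inj_on w B"
  proof (rule inj_onI, rule ccontr)
    fix b1 b2 assume b: "b1 \<in> B" "b2 \<in> B" "w b1 = w b2" "b1 \<noteq> b2"
    define c where "c b = (if b = b1 then 1 else 0) - (if b = b2 then (1::complex) else 0)" for b
    have trm: "cst (c b) * w b = (if b = b1 then w b else 0) - (if b = b2 then w b else 0)" for b
      using b(4) by (cases "b = b1"; cases "b = b2") (simp_all add: c_def)
    have "(\<Sum>b\<in>B. cst (c b) * w b) = (\<Sum>b\<in>B. (if b = b1 then w b else 0) - (if b = b2 then w b else 0))"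
      by (rule sum.cong[OF refl]) (rule trm)
    also have "\<dots> = (\<Sum>b\<in>B. if b = b1 then w b else 0) - (\<Sum>b\<in>B. if b = b2 then w b else 0)"
      by (rule sum_subtractf)
    also have "\<dots> = 0" using b fB by (simp add: sum.delta)
    finally have "\<forall>b\<in>B. c b = 0" by (rule key)
    then show False using b by (auto simp: c_def)
  qed
  have indep: "bvs.independent (w ` B)"
  proof
    assume "bvs.dependent (w ` B)"
    then obtain t u where t: "finite t" "t \<subseteq> w ` B" "(\<Sum>v\<in>t. cst (u v) * v) = 0" "\<exists>v\<in>t. u v \<noteq> 0"
      unfolding bvs.dependent_explicit by blast
    define B' where "B' = {b \<in> B. w b \<in> t}"
    have wB': "w ` B' = t" using t(2) by (auto simp: B'_def)
    have injB': "inj_on w B'" using inj by (rule inj_on_subset) (auto simp: B'_def)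
    define c where "c b = (if w b \<in> t then u (w b) else 0)" for b
    have "(\<Sum>b\<in>B. cst (c b) * w b) = (\<Sum>b\<in>B. if w b \<in> t then cst (u (w b)) * w b else 0)"
      by (rule sum.cong[OF refl]) (simp add: c_def)
    also have "\<dots> = (\<Sum>b\<in>B'. cst (u (w b)) * w b)"
      unfolding B'_def using sum.inter_filter[OF fB, of "\<lambda>b. cst (u (w b)) * w b" "\<lambda>b. w b \<in> t"] by simp
    also have "\<dots> = (\<Sum>v\<in>t. cst (u v) * v)" unfolding wB'[symmetric] using injB' by (simp add: sum.reindex)
    also have "\<dots> = 0" by (rule t(3))
    finally have c0: "\<forall>b\<in>B. c b = 0" by (rule key)
    from t(4) obtain v where v: "v \<in> t" "u v \<noteq> 0" by blast
    then obtain b where b: "b \<in> B" "v = w b" using t(2) by blast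
    then have "c b = u v" using v by (simp add: c_def)
    then show False using c0 b v by simp
  qed
  have "w ` B \<subseteq> bvs.span S"
  proof
    fix v assume "v \<in> w ` B"
    then obtain b where "v = w b" by blast
    then show "v \<in> bvs.span S" unfolding bvs.span_explicit w_def using S(1) by blast
  qed
  then have "card (w ` B) \<le> card S" using bvs.independent_span_bound[OF S(1) indep] by blast
  then show ?thesis using card_image[OF inj] by simp
qed

lemma qdeg_basis:
  assumes bm: "basis_mod J B" and I: "is_ideal J"
  shows "qdeg J = card B"
  unfolding qdeg_def
proof (rule Least_equality)
  have "finite B" "spans_mod J B" using bm unfolding basis_mod_def by blast+
  then show "\<exists>B'. finite B' \<and> card B' = card B \<and> spans_mod J B'" by blast
next
  fix m assume "\<exists>S. finite S \<and> card S = m \<and> spans_mod J S"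
  then show "card B \<le> m" using span_bound[OF bm I] by blast
qed

definition mm :: "nat \<times> nat \<Rightarrow> bpoly" where "mm e = gamma ^ fst e * alpha ^ snd e"

lemma alpha_pow: "alpha ^ j = monom 1 j"
  by (induction j) (simp_all add: alpha_mult monom_Suc one_pCons monom_0)

lemma X_pow: "([:0,1:] :: complex poly) ^ i = monom 1 i"
  by (induction i) (simp_all add: monom_Suc one_pCons monom_0)

lemma mm_eq: "mm (i, j) = monom (monom 1 i) j"
  by (simp add: mm_def gamma_pow_mult alpha_pow X_pow smult_monom)

lemma coeff_mm: "coeff (coeff (mm (i, j)) b) a = (if b = j \<and> a = i then 1 else 0)"
  by (simp add: mm_eq coeff_monom)

lemma coeff_cst_mm: "coeff (coeff (cst c * mm (i, j)) b) a = (if b = j \<and> a = i then c else 0)"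
  by (simp add: cst_mult coeff_mm)

lemma coeff_cst_mm': "coeff (coeff (cst c * mm x) b) a = (if x = (a, b) then c else 0)"
proof (cases x)
  case (Pair i j) then show ?thesis by (auto simp: coeff_cst_mm)
qed

lemma coeff_sum_mm:
  assumes "finite I"
  shows "coeff (coeff (\<Sum>x\<in>I. cst (w x) * mm x) b) a = (if (a, b) \<in> I then w (a, b) else 0)"
proof -
  have "coeff (coeff (\<Sum>x\<in>I. cst (w x) * mm x) b) a = (\<Sum>x\<in>I. coeff (coeff (cst (w x) * mm x) b) a)"
    by (simp add: coeff_sum)
  also have "\<dots> = (\<Sum>x\<in>I. if x = (a, b) then w x else 0)"
    by (rule sum.cong[OF refl]) (simp add: coeff_cst_mm')
  also have "\<dots> = (if (a, b) \<in> I then w (a, b) else 0)" using assms by (simp add: sum.delta')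
  finally show ?thesis .
qed

lemma mm_inj: "inj mm"
proof (rule injI)
  fix x y assume "mm x = mm y"
  then have "coeff (coeff (mm x) (snd y)) (fst y) = 1" using coeff_mm[of "fst y" "snd y"] by simp
  then show "x = y" using coeff_mm[of "fst x" "snd x" "snd y" "fst y"] by (auto split: if_splits simp: prod_eq_iff)
qed

lemma mm_ne0: "mm e \<noteq> 0"
  using coeff_mm[of "fst e" "snd e" "snd e" "fst e"] by auto

lemma lexp_gamma_pow_mult:
  assumes "lead_coeff p = 1"
  shows "lexp (gamma ^ k * p) = (degree p, k)"
proof -
  have "gamma ^ k * p = smult ([:0,1:] ^ k) p" by (rule gamma_pow_mult)
  moreover have "[:0,1:] ^ k \<noteq> (0 :: complex poly)" by simp
  ultimately show ?thesis using assms
    by (simp add: lexp_def lead_coeff_smult degree_power_eq del: lead_coeff_smult)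
qed

lemma lexp_gamma_pow_zeta: "lexp (gamma ^ k * zeta m) = (m, k)"
proof -
  have l: "lead_coeff (zeta m) = 1" and d: "degree (zeta m) = m" using zeta_monic[of m] by blast+
  show ?thesis by (rule lexp_gamma_pow_mult[OF l, of k, unfolded d])
qed

lemma mon_eq: "mon (m, k) = gamma ^ k * alpha ^ m"
  by (simp add: mon_def mult.commute)

lemma gamma_pow_ne0: "gamma ^ k * zeta m \<noteq> 0"
proof
  assume "gamma ^ k * zeta m = 0"
  then have "gamma ^ k = 0 \<or> zeta m = 0" by simp
  then show False using zeta_monic[of m] by auto
qed

lemma sum_odd_rows: "(\<Sum>i<n. 2 * n - 1 - 2 * i) = (n::nat) ^ 2"
proof (induction n)
  case 0 then show ?case by simp
next
  case (Suc n)
  have "(\<Sum>i<n. 2 * Suc n - 1 - 2 * i) = (\<Sum>i<n. (2 * n - 1 - 2 * i) + 2)"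
    by (rule sum.cong) auto
  also have "\<dots> = (\<Sum>i<n. 2 * n - 1 - 2 * i) + (\<Sum>i<n. 2)" by (rule sum.distrib)
  also have "\<dots> = n ^ 2 + 2 * n" using Suc.IH by simp
  finally have "(\<Sum>i<n. 2 * Suc n - 1 - 2 * i) = n ^ 2 + 2 * n" .
  then show ?case by (simp add: power2_eq_square algebra_simps)
qed



lemma idx_finite: "finite {(i, j). i < n \<and> j + 2 * i + 1 < 2 * (n::nat)}"
proof -
  have "{(i, j). i < n \<and> j + 2 * i + 1 < 2 * n} \<subseteq> {..<n} \<times> {..<2 * n}" by auto
  then show ?thesis by (rule finite_subset) simp
qed

lemma idx_card: "card {(i, j). i < n \<and> j + 2 * i + 1 < 2 * (n::nat)} = n ^ 2"
proof -
  have "{(i, j). i < n \<and> j + 2 * i + 1 < 2 * n} = (SIGMA i:{..<n}. {..<2 * n - 1 - 2 * i})" by auto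
  then have "card {(i, j). i < n \<and> j + 2 * i + 1 < 2 * n} = (\<Sum>i<n. card {..<2 * n - 1 - 2 * i})"
    by (simp add: card_SigmaI)
  also have "\<dots> = n ^ 2" using sum_odd_rows by simp
  finally show ?thesis .
qed

lemma supp_iff: "supp n v \<longleftrightarrow> (\<forall>j i. coeff (coeff v j) i \<noteq> 0 \<longrightarrow> (i, j) \<in> {(i, j). i < n \<and> j + 2 * i + 1 < 2 * n})"
  unfolding supp_def by simp

lemma lexp_mm: "lexp (mm (i, j)) = (j, i)"
proof -
  have "lead_coeff (alpha ^ j) = 1" "degree (alpha ^ j) = j" by (simp_all add: alpha_pow degree_monom_eq)
  then show ?thesis unfolding mm_def using lexp_gamma_pow_mult[of "alpha ^ j" i] by simp
qed

lemma sum_mm_eq: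
  assumes "finite I" "\<And>i j. coeff (coeff v j) i \<noteq> 0 \<Longrightarrow> (i, j) \<in> I"
  shows "(\<Sum>x\<in>I. cst (coeff (coeff v (snd x)) (fst x)) * mm x) = v"
proof (rule poly_eqI)
  fix b
  show "coeff (\<Sum>x\<in>I. cst (coeff (coeff v (snd x)) (fst x)) * mm x) b = coeff v b"
  proof (rule poly_eqI)
    fix a
    show "coeff (coeff (\<Sum>x\<in>I. cst (coeff (coeff v (snd x)) (fst x)) * mm x) b) a = coeff (coeff v b) a"
      unfolding coeff_sum_mm[OF assms(1)] using assms(2)[of b a] by auto
  qed
qed

lemma JJ_gens_dvd: "gamma ^ k * zi (2 * int m - 1) \<in> JJ (m + k)"
  using gamma_pow_JJ[OF JJ_gens(1)[of m], of k] by simp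

theorem proposition5p11:
  fixes g :: nat
  assumes "odd g" and "g \<ge> 1"
  defines "G \<equiv> insert (gamma ^ ((g + 1) div 2))
                  ((\<lambda>k. gamma ^ k * zeta (g - 2 * k)) ` {0..(g - 1) div 2})"
      and "B \<equiv> {gamma ^ i * alpha ^ j | i j. i \<le> (g - 1) div 2 \<and> j < g - 2 * i}"
  shows "is_groebner_basis G (Jp g)
    \<and> initial_ideal (Jp g) = gen_ideal (insert (gamma ^ ((g + 1) div 2))
                  ((\<lambda>i. gamma ^ i * alpha ^ (g - 2 * i)) ` {0..(g - 1) div 2}))
    \<and> basis_mod (Jp g) B
    \<and> card B = (g + 1)^2 div 4
    \<and> qdeg (Jp g) = (g + 1)^2 div 4
    \<and> ((g + 1) mod 4 = 0 \<longrightarrow> Jp (g + 1) = Jp g)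
    \<and> ((g + 1) mod 4 = 2 \<longrightarrow>
           int (qdeg (Jp (g + 1))) - int (qdeg (Jp g)) = 1
         \<and> Jp g = gen_ideal (insert (gamma ^ ((g + 1) div 2)) (Jp (g + 1)))
         \<and> basis_mod (Jp (g + 1)) (insert (gamma ^ ((g + 1) div 2)) B))"
proof -
  define n where "n = (g + 1) div 2"
  obtain m where gm: "g = 2 * m + 1" using assms(1) by (elim oddE)
  have nm: "n = Suc m" unfolding n_def gm by simp
  have n1: "n \<ge> 1" unfolding nm by simp
  have gn: "g = 2 * n - 1" unfolding nm gm by simp
  have gm1: "(g - 1) div 2 = n - 1" unfolding nm gm by simp
  have gp1: "(g + 1) div 2 = n" by (simp add: n_def)
  have ig: "int g = 2 * int n - 1" unfolding gm nm by simp
  have z1: "zeta g = zi (2 * int n - 1)" using zi_nat[of g, unfolded ig] by (rule sym)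
  have z2: "zeta (g + 1) = zi (2 * int n)"
  proof -
    have e: "int (g + 1) = 2 * int n" unfolding gm nm by simp
    show ?thesis using zi_nat[of "g + 1", unfolded e] by (rule sym)
  qed
  have z3: "zeta (g + 2) = zi (2 * int n + 1)"
  proof -
    have e: "int (g + 2) = 2 * int n + 1" unfolding gm nm by simp
    show ?thesis using zi_nat[of "g + 2", unfolded e] by (rule sym)
  qed
  have z4: "zeta (g + 3) = zi (2 * int n + 2)"
  proof -
    have e: "int (g + 3) = 2 * int n + 2" unfolding gm nm by simp
    show ?thesis using zi_nat[of "g + 3", unfolded e] by (rule sym)
  qed
  have Jg: "Jp g = JJ n" unfolding Jp_def JJ_def z1 z2 z3 ..
  have Jh: "Jp (g + 1) = HH n"
  proof -
    have "g + 1 + 1 = g + 2" "g + 1 + 2 = g + 3" by simp_all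
    then show ?thesis unfolding Jp_def HH_def by (simp only: z2 z3 z4)
  qed
  define I where "I = {(i, j). i < n \<and> j + 2 * i + 1 < 2 * n}"
  have fI: "finite I" unfolding I_def by (rule idx_finite)
  have BI: "B = mm ` I"
  proof (rule set_eqI)
    fix x
    show "x \<in> B \<longleftrightarrow> x \<in> mm ` I"
    proof
      assume "x \<in> B"
      then obtain i j where x: "x = gamma ^ i * alpha ^ j" "i \<le> (g - 1) div 2" "j < g - 2 * i"
        unfolding B_def by blast
      have "(i, j) \<in> I" using x(2,3) unfolding I_def gm1 gn using n1 by auto
      then show "x \<in> mm ` I" unfolding x(1) mm_def by force
    next
      assume "x \<in> mm ` I"
      then obtain i j where x: "x = mm (i, j)" "i < n" "j + 2 * i + 1 < 2 * n" unfolding I_def by blast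
      have "i \<le> (g - 1) div 2" "j < g - 2 * i" using x(2,3) unfolding gm1 gn by auto
      then show "x \<in> B" unfolding B_def x(1) mm_def by auto
    qed
  qed
  have injI: "inj_on mm I" using mm_inj by (rule inj_on_subset) simp
  have fB: "finite B" unfolding BI using fI by simp
  have cardB: "card B = n ^ 2"
  proof -
    have "card B = card I" unfolding BI by (rule card_image[OF injI])
    also have "\<dots> = n ^ 2" unfolding I_def by (rule idx_card)
    finally show ?thesis .
  qed
  have sumB: "(\<Sum>b\<in>B. cst (c b) * b) = (\<Sum>x\<in>I. cst (c (mm x)) * mm x)" for c
    unfolding BI using injI by (simp add: sum.reindex)
  have suppI: "supp n v \<longleftrightarrow> (\<forall>j i. coeff (coeff v j) i \<noteq> 0 \<longrightarrow> (i, j) \<in> I)" for v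
    unfolding I_def by (rule supp_iff)
  have spanB: "\<exists>c. p - (\<Sum>b\<in>B. cst (c b) * b) \<in> JJ n" for p
  proof -
    obtain v where v: "supp n v" "p - v \<in> JJ n" using span_JJ by blast
    define c where "c b = coeff (coeff v (fst (lexp b))) (snd (lexp b))" for b
    have "(\<Sum>b\<in>B. cst (c b) * b) = (\<Sum>x\<in>I. cst (coeff (coeff v (snd x)) (fst x)) * mm x)"
      unfolding sumB by (rule sum.cong[OF refl]) (auto simp: c_def lexp_mm)
    also have "\<dots> = v" using fI v(1) unfolding suppI by (intro sum_mm_eq) auto
    finally show ?thesis using v(2) by metis
  qed
  have indepB: "\<forall>b\<in>B. c b = 0" if cJ: "(\<Sum>b\<in>B. cst (c b) * b) \<in> JJ n" for c
  proof -
    define V where "V = (\<Sum>x\<in>I. cst (c (mm x)) * mm x)"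
    have cV: "coeff (coeff V b) a = (if (a, b) \<in> I then c (mm (a, b)) else 0)" for a b
      unfolding V_def by (rule coeff_sum_mm[OF fI])
    have "supp n V" unfolding suppI using cV by auto
    moreover have "V \<in> JJ n" using cJ unfolding sumB V_def .
    ultimately have "V = 0" by (rule indep_JJ)
    then have "c (mm (a, b)) = 0" if "(a, b) \<in> I" for a b using cV[of b a] that by simp
    then show ?thesis unfolding BI by auto
  qed
  have basisB: "basis_mod (JJ n) B"
    unfolding basis_mod_def spans_mod_def using fB spanB indepB by blast
  have qdegJ: "qdeg (JJ n) = n ^ 2" using qdeg_basis[OF basisB JJ_ideal] cardB by simp
  have sq: "(g + 1)^2 div 4 = n ^ 2" unfolding gm nm by (simp add: power2_eq_square algebra_simps)
  have Gn: "G = insert (gamma ^ n) ((\<lambda>k. gamma ^ k * zeta (g - 2 * k)) ` {0..n - 1})"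
    unfolding G_def gp1 gm1 ..
  have zk: "zeta (g - 2 * k) = zi (2 * int (n - k) - 1)" if "k \<le> n - 1" for k
  proof -
    have e: "int (g - 2 * k) = 2 * int (n - k) - 1" using that unfolding gm nm by auto
    show ?thesis using zi_nat[of "g - 2 * k", unfolded e] by (rule sym)
  qed
  have GJ: "G \<subseteq> JJ n"
  proof
    fix p assume "p \<in> G"
    then consider "p = gamma ^ n" | k where "k \<in> {0..n - 1}" "p = gamma ^ k * zeta (g - 2 * k)"
      unfolding Gn by blast
    then show "p \<in> JJ n"
    proof cases
      case 1 then show ?thesis using gamma_pow_in_JJ by simp
    next
      case 2
      have "gamma ^ k * zi (2 * int (n - k) - 1) \<in> JJ (n - k + k)" by (rule JJ_gens_dvd)
      moreover have "n - k + k = n" using 2(1) n1 by auto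
      ultimately show ?thesis using 2 zk by simp
    qed
  qed
  define M where "M = insert (gamma ^ n) ((\<lambda>i. gamma ^ i * alpha ^ (g - 2 * i)) ` {0..n - 1})"
  have LMG: "{mon (lexp p) | p. p \<in> G \<and> p \<noteq> 0} = M"
  proof -
    have lg: "lexp (gamma ^ n) = (0, n)" using lexp_gamma_pow_zeta[of n 0] by simp
    have g0: "gamma ^ n \<noteq> (0::bpoly)" by simp
    show ?thesis
    proof (rule set_eqI, rule iffI)
      fix x assume "x \<in> {mon (lexp p) | p. p \<in> G \<and> p \<noteq> 0}"
      then obtain p where p: "x = mon (lexp p)" "p \<in> G" by blast
      from p(2) consider "p = gamma ^ n" | k where "k \<in> {0..n - 1}" "p = gamma ^ k * zeta (g - 2 * k)"
        unfolding Gn by blast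
      then show "x \<in> M"
      proof cases
        case 1 then have "x = gamma ^ n" using p(1) lg by (simp add: mon_eq)
        then show ?thesis unfolding M_def by simp
      next
        case 2 then have "x = gamma ^ k * alpha ^ (g - 2 * k)" using p(1) by (simp add: lexp_gamma_pow_zeta mon_eq)
        then show ?thesis unfolding M_def using 2(1) by blast
      qed
    next
      fix x assume "x \<in> M"
      then consider "x = gamma ^ n" | k where "k \<in> {0..n - 1}" "x = gamma ^ k * alpha ^ (g - 2 * k)"
        unfolding M_def by blast
      then show "x \<in> {mon (lexp p) | p. p \<in> G \<and> p \<noteq> 0}"
      proof cases
        case 1
        have "gamma ^ n \<in> G" unfolding Gn by simp
        moreover have "x = mon (lexp (gamma ^ n))" using 1 lg by (simp add: mon_eq)
        ultimately show ?thesis using g0 by blast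
      next
        case 2
        have "gamma ^ k * zeta (g - 2 * k) \<in> G" unfolding Gn using 2(1) by blast
        moreover have "x = mon (lexp (gamma ^ k * zeta (g - 2 * k)))" using 2(2)
          by (simp add: lexp_gamma_pow_zeta mon_eq)
        ultimately show ?thesis using gamma_pow_ne0 by blast
      qed
    qed
  qed
  have init: "initial_ideal (JJ n) = gen_ideal M"
  proof
    have "M \<subseteq> {mon (lexp p) | p. p \<in> JJ n \<and> p \<noteq> 0}" unfolding LMG[symmetric] using GJ by blast
    then show "gen_ideal M \<subseteq> initial_ideal (JJ n)" unfolding initial_ideal_def by (rule gen_ideal_mono)
  next
    have "mon (lexp p) \<in> gen_ideal M" if p: "p \<in> JJ n" "p \<noteq> 0" for p
    proof -
      define d where "d = degree p"
      define e where "e = degree (lead_coeff p)"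
      have me: "mon (lexp p) = gamma ^ e * alpha ^ d" unfolding lexp_def d_def e_def by (simp add: mon_eq)
      from lt_JJ[OF p] show ?thesis
      proof
        assume ne: "n \<le> degree (lead_coeff p)"
        have "gamma ^ e * alpha ^ d = (gamma ^ (e - n) * alpha ^ d) * gamma ^ n"
          using ne unfolding e_def by (simp add: power_add[symmetric] algebra_simps)
        moreover have "gamma ^ n \<in> gen_ideal M" unfolding M_def by (rule gen_ideal_mem) simp
        ultimately show ?thesis unfolding me by (metis gen_ideal_mult)
      next
        assume "\<exists>k<n. 2 * n \<le> degree p + 2 * k + 1 \<and> k \<le> degree (lead_coeff p)"
        then obtain k where k: "k < n" "2 * n \<le> d + 2 * k + 1" "k \<le> e" unfolding d_def e_def by blast
        have gk: "g - 2 * k \<le> d" using k unfolding gn by arith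
        have "gamma ^ e * alpha ^ d = (gamma ^ (e - k) * alpha ^ (d - (g - 2 * k))) * (gamma ^ k * alpha ^ (g - 2 * k))"
          using k(3) gk by (simp add: power_add[symmetric] algebra_simps)
        moreover have "gamma ^ k * alpha ^ (g - 2 * k) \<in> gen_ideal M"
          unfolding M_def using k(1) by (intro gen_ideal_mem) auto
        ultimately show ?thesis unfolding me by (metis gen_ideal_mult)
      qed
    qed
    then show "initial_ideal (JJ n) \<subseteq> gen_ideal M" unfolding initial_ideal_def
      by (intro gen_ideal_least gi) blast
  qed
  have GB: "is_groebner_basis G (Jp g)" unfolding is_groebner_basis_def Jg LMG using GJ init by blast
  have init2: "initial_ideal (Jp g) = gen_ideal (insert (gamma ^ ((g + 1) div 2))
                  ((\<lambda>i. gamma ^ i * alpha ^ (g - 2 * i)) ` {0..(g - 1) div 2}))"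
    unfolding Jg gp1 gm1 init M_def ..
  have mod0: "(g + 1) mod 4 = 0 \<longleftrightarrow> even n" unfolding gm nm by presburger
  have mod2: "(g + 1) mod 4 = 2 \<longleftrightarrow> odd n" unfolding gm nm by presburger
  have E0: "(g + 1) mod 4 = 0 \<longrightarrow> Jp (g + 1) = Jp g"
    unfolding Jg Jh mod0 using HH_even[OF n1] by blast
  have E2: "(g + 1) mod 4 = 2 \<longrightarrow>
           int (qdeg (Jp (g + 1))) - int (qdeg (Jp g)) = 1
         \<and> Jp g = gen_ideal (insert (gamma ^ ((g + 1) div 2)) (Jp (g + 1)))
         \<and> basis_mod (Jp (g + 1)) (insert (gamma ^ ((g + 1) div 2)) B)"
  proof
    assume "(g + 1) mod 4 = 2"
    then have on: "odd n" using mod2 by simp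
    have gnH: "gamma ^ n \<notin> HH n" using gamma_pow_notin_HH[OF on] .
    have gnB: "gamma ^ n \<notin> B"
    proof
      assume "gamma ^ n \<in> B"
      then obtain x where x: "x \<in> I" "gamma ^ n = mm x" unfolding BI by blast
      have "mm (n, 0) = mm x" using x(2) by (simp add: mm_def)
      then have "x = (n, 0)" using mm_inj by (metis injD)
      then show False using x(1) unfolding I_def by simp
    qed
    have JJeq: "JJ n = gen_ideal (insert (gamma ^ n) (HH n))"
    proof
      obtain c where c: "zi (2 * int n - 1) - cst c * gamma ^ n \<in> HH n" using HH_odd[OF n1] by blast
      have m1: "zi (2 * int n - 1) - cst c * gamma ^ n \<in> gen_ideal (insert (gamma ^ n) (HH n))"
        using c by (intro gen_ideal_mem) simp
      have m2: "cst c * gamma ^ n \<in> gen_ideal (insert (gamma ^ n) (HH n))"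
        by (intro gen_ideal_mult gen_ideal_mem) simp
      have "zi (2 * int n - 1) = (zi (2 * int n - 1) - cst c * gamma ^ n) + cst c * gamma ^ n" by simp
      then have g1: "zi (2 * int n - 1) \<in> gen_ideal (insert (gamma ^ n) (HH n))"
        using gen_ideal_add[OF m1 m2] by simp
      show "JJ n \<subseteq> gen_ideal (insert (gamma ^ n) (HH n))" unfolding JJ_def
        using g1 HH_gens by (intro gen_ideal_least gi) (auto intro: gen_ideal_mem)
    next
      show "gen_ideal (insert (gamma ^ n) (HH n)) \<subseteq> JJ n"
        using gamma_pow_in_JJ HH_sub_JJ by (intro gen_ideal_least JJ_ideal) auto
    qed
    have agn: "alpha * gamma ^ n \<in> HH n"
    proof -
      obtain k where k: "n = Suc k" using n1 by (cases n) auto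
      have "gamma ^ k * zi (2 * int 1 - 1) \<in> JJ (1 + k)" by (rule JJ_gens_dvd)
      then have "gamma ^ k * alpha \<in> JJ n" unfolding k by simp
      then have "gamma * (gamma ^ k * alpha) \<in> JJ (Suc n)" by (rule gamma_JJ)
      moreover have "gamma * (gamma ^ k * alpha) = alpha * gamma ^ n" unfolding k by (simp add: algebra_simps)
      ultimately show ?thesis using JJ_Suc_sub_HH by auto
    qed
    have ggn: "gamma * gamma ^ n \<in> HH n" using gamma_JJ[OF gamma_pow_in_JJ[of n]] JJ_Suc_sub_HH by auto
    have redg: "a * gamma ^ n - cst (poly (ev0 a) 0) * gamma ^ n \<in> HH n" for a
    proof -
      have "poly (ev0 a - [:poly (ev0 a) 0:]) 0 = 0" by simp
      then obtain e' where e': "ev0 a - [:poly (ev0 a) 0:] = [:0,1:] * e'"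
        using poly_eq_0_iff_dvd[of "ev0 a - [:poly (ev0 a) 0:]" 0] by (auto elim: dvdE)
      have la: "lift (ev0 a) = cst (poly (ev0 a) 0) + alpha * lift e'"
      proof -
        have "lift (ev0 a) = lift ([:poly (ev0 a) 0:] + [:0,1:] * e')" using e' by (simp add: algebra_simps)
        also have "\<dots> = cst (poly (ev0 a) 0) + alpha * lift e'"
          by (simp add: lift_pCons)
        finally show ?thesis .
      qed
      have "a * gamma ^ n - cst (poly (ev0 a) 0) * gamma ^ n = lift e' * (alpha * gamma ^ n) + tl0 a * (gamma * gamma ^ n)"
        by (subst decomp0[of a]) (simp add: la algebra_simps)
      also have "\<dots> \<in> HH n"
        by (rule is_idealD(2)[OF HH_ideal is_idealD(3)[OF HH_ideal agn] is_idealD(3)[OF HH_ideal ggn]])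
      finally show ?thesis .
    qed
    have redJ: "\<exists>c. x - cst c * gamma ^ n \<in> HH n" if "x \<in> JJ n" for x
    proof -
      let ?T = "{x. \<exists>c. x - cst c * gamma ^ n \<in> HH n}"
      have T: "is_ideal ?T" unfolding is_ideal_def
      proof (intro conjI ballI allI)
        show "0 \<in> ?T" using is_idealD(1)[OF HH_ideal] by (auto intro!: exI[of _ 0])
      next
        fix x y assume "x \<in> ?T" "y \<in> ?T"
        then obtain c d where "x - cst c * gamma ^ n \<in> HH n" "y - cst d * gamma ^ n \<in> HH n" by blast
        then have "(x - cst c * gamma ^ n) + (y - cst d * gamma ^ n) \<in> HH n" by (rule is_idealD(2)[OF HH_ideal])
        moreover have "(x - cst c * gamma ^ n) + (y - cst d * gamma ^ n) = (x + y) - cst (c + d) * gamma ^ n"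
          by (simp add: cst_add algebra_simps)
        ultimately show "x + y \<in> ?T" by auto
      next
        fix a x assume "x \<in> ?T"
        then obtain c where c: "x - cst c * gamma ^ n \<in> HH n" by blast
        have "a * (x - cst c * gamma ^ n) + cst c * (a * gamma ^ n - cst (poly (ev0 a) 0) * gamma ^ n) \<in> HH n"
          by (rule is_idealD(2)[OF HH_ideal is_idealD(3)[OF HH_ideal c] is_idealD(3)[OF HH_ideal redg[of a]]])
        moreover have "a * (x - cst c * gamma ^ n) + cst c * (a * gamma ^ n - cst (poly (ev0 a) 0) * gamma ^ n)
            = a * x - cst (c * poly (ev0 a) 0) * gamma ^ n"
          by (simp add: algebra_simps cst_mult_cst[symmetric])
        ultimately show "a * x \<in> ?T" by auto
      qed
      have "JJ n \<subseteq> ?T" unfolding JJeq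
      proof (intro gen_ideal_least T)
        show "insert (gamma ^ n) (HH n) \<subseteq> ?T"
        proof
          fix y assume "y \<in> insert (gamma ^ n) (HH n)"
          then show "y \<in> ?T"
          proof
            assume "y = gamma ^ n"
            then have "y - cst 1 * gamma ^ n = 0" by simp
            then show ?thesis using is_idealD(1)[OF HH_ideal] by (metis (mono_tags, lifting) mem_Collect_eq)
          next
            assume "y \<in> HH n"
            then have "y - cst 0 * gamma ^ n \<in> HH n" by simp
            then show ?thesis by blast
          qed
        qed
      qed
      then show ?thesis using that by blast
    qed
    have basisH: "basis_mod (HH n) (insert (gamma ^ n) B)"
      unfolding basis_mod_def spans_mod_def
    proof (intro conjI allI impI ballI)
      show "finite (insert (gamma ^ n) B)" using fB by simp
    next
      fix p
      obtain c0 where c0: "p - (\<Sum>b\<in>B. cst (c0 b) * b) \<in> JJ n" using spanB by blast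
      obtain c' where c': "p - (\<Sum>b\<in>B. cst (c0 b) * b) - cst c' * gamma ^ n \<in> HH n" using redJ[OF c0] by blast
      define c where "c b = (if b = gamma ^ n then c' else c0 b)" for b
      have "(\<Sum>b\<in>insert (gamma ^ n) B. cst (c b) * b) = cst c' * gamma ^ n + (\<Sum>b\<in>B. cst (c0 b) * b)"
        using fB gnB by (simp add: c_def) (rule sum.cong; auto)
      then show "\<exists>c. p - (\<Sum>b\<in>insert (gamma ^ n) B. cst (c b) * b) \<in> HH n"
        using c' by (intro exI[of _ c]) (simp add: algebra_simps)
    next
      fix c b assume cH: "(\<Sum>b\<in>insert (gamma ^ n) B. cst (c b) * b) \<in> HH n" and b: "b \<in> insert (gamma ^ n) B"
      have se: "(\<Sum>b\<in>insert (gamma ^ n) B. cst (c b) * b) = cst (c (gamma ^ n)) * gamma ^ n + (\<Sum>b\<in>B. cst (c b) * b)"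
        using fB gnB by simp
      have "(\<Sum>b\<in>B. cst (c b) * b) = (\<Sum>b\<in>insert (gamma ^ n) B. cst (c b) * b) - cst (c (gamma ^ n)) * gamma ^ n"
        unfolding se by simp
      also have "\<dots> \<in> JJ n" using cH HH_sub_JJ gamma_pow_in_JJ by (intro JJ_diff JJ_mult) auto
      finally have cB: "\<forall>b\<in>B. c b = 0" by (rule indepB)
      have "cst (c (gamma ^ n)) * gamma ^ n \<in> HH n" using cH unfolding se using cB by simp
      then have "c (gamma ^ n) = 0" using gnH ideal_cancel_cst[OF HH_ideal] by blast
      then show "c b = 0" using b cB by auto
    qed
    have qH: "qdeg (HH n) = n ^ 2 + 1"
      using qdeg_basis[OF basisH HH_ideal] cardB fB gnB by simp
    show "int (qdeg (Jp (g + 1))) - int (qdeg (Jp g)) = 1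
         \<and> Jp g = gen_ideal (insert (gamma ^ ((g + 1) div 2)) (Jp (g + 1)))
         \<and> basis_mod (Jp (g + 1)) (insert (gamma ^ ((g + 1) div 2)) B)"
      unfolding Jg Jh gp1 using qH qdegJ JJeq basisH by simp
  qed
  have b': "basis_mod (Jp g) B" using basisB unfolding Jg .
  have q': "qdeg (Jp g) = (g + 1)^2 div 4" unfolding Jg qdegJ sq ..
  have c': "card B = (g + 1)^2 div 4" unfolding cardB sq ..
  show ?thesis using GB init2 b' c' q' E0 E2 by blast
qed


end
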